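(* Let $R$ be a compact noetherian local ring with maximal ideal $\mathfrak{m}_R$, $\sigma$ a ring automorphism of $R$ with $\sigma(\mathfrak{m}_R)=\mathfrak{m}_R$, and $\delta$ a $\sigma$-derivation with $\delta(R)\subseteq\mathfrak{m}_R$, $\delta(\mathfrak{m}_R)\subseteq\mathfrak{m}_R^2$. Let $A=R[[Y;\sigma,\delta]]$ and $B=R[Y;\sigma,\delta]\subseteq A$. Let $M$ be a finitely generated $A$-module which is finitely generated as an $R$-module. Then every $B$-submodule $N\subseteq M$ is an $A$-submodule, and every $B$-module quotient of $M$ is an $A$-module quotient.
   Context: A $\sigma$-derivation is an additive map with $\delta(rs)=\delta(r)s+\sigma(r)\delta(s)$. $R[[Y;\sigma,\delta]]$ is the skew power series ring of formal series $\sum r_nY^n$ with multiplication determined by $Yr=\sigma(r)Y+\delta(r)$, and $R[Y;\sigma,\delta]$ the subring of polynomials. *)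

theory Defs
  imports Complex_Main
begin

definition is_unit :: "'r::ring_1 \<Rightarrow> bool" where
  "is_unit x \<longleftrightarrow> (\<exists>y. x * y = 1 \<and> y * x = 1)"

text \<open>Local ring: the non-units form an additive subgroup (equivalently a
  unique maximal left/right/two-sided ideal); the maximal ideal is the set of non-units.\<close>
definition local_ring :: "'r::ring_1 itself \<Rightarrow> bool" where
  "local_ring _ \<longleftrightarrow> (1::'r) \<noteq> 0 \<and>
     (\<forall>x y::'r. \<not> is_unit x \<and> \<not> is_unit y \<longrightarrow> \<not> is_unit (x + y))"

definition max_ideal :: "'r::ring_1 set" where
  "max_ideal = {x. \<not> is_unit x}"

definition left_ideal :: "'r::ring_1 set \<Rightarrow> bool" where
  "left_ideal I \<longleftrightarrow> 0 \<in> I \<and> (\<forall>x\<in>I. \<forall>y\<in>I. x + y \<in> I) \<and> (\<forall>r. \<forall>x\<in>I. r * x \<in> I)"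

definition right_ideal :: "'r::ring_1 set \<Rightarrow> bool" where
  "right_ideal I \<longleftrightarrow> 0 \<in> I \<and> (\<forall>x\<in>I. \<forall>y\<in>I. x + y \<in> I) \<and> (\<forall>r. \<forall>x\<in>I. x * r \<in> I)"

definition noetherian_ring :: "'r::ring_1 itself \<Rightarrow> bool" where
  "noetherian_ring _ \<longleftrightarrow>
     (\<forall>I :: nat \<Rightarrow> 'r set. (\<forall>n. left_ideal (I n)) \<and> (\<forall>n. I n \<subseteq> I (Suc n))
          \<longrightarrow> (\<exists>N. \<forall>n\<ge>N. I n = I N)) \<and>
     (\<forall>I :: nat \<Rightarrow> 'r set. (\<forall>n. right_ideal (I n)) \<and> (\<forall>n. I n \<subseteq> I (Suc n))
          \<longrightarrow> (\<exists>N. \<forall>n\<ge>N. I n = I N))"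

definition ideal_sq :: "'r::ring_1 set \<Rightarrow> 'r set" where
  "ideal_sq I = {s. \<exists>(n::nat) xs ys. (\<forall>i<n. xs i \<in> I \<and> ys i \<in> I) \<and> s = (\<Sum>i<n. xs i * ys i)}"

definition ring_automorphism :: "('r::ring_1 \<Rightarrow> 'r) \<Rightarrow> bool" where
  "ring_automorphism \<sigma> \<longleftrightarrow> bij \<sigma> \<and> \<sigma> 1 = 1 \<and>
     (\<forall>x y. \<sigma> (x + y) = \<sigma> x + \<sigma> y) \<and> (\<forall>x y. \<sigma> (x * y) = \<sigma> x * \<sigma> y)"

definition sigma_derivation :: "('r::ring_1 \<Rightarrow> 'r) \<Rightarrow> ('r \<Rightarrow> 'r) \<Rightarrow> bool" where
  "sigma_derivation \<sigma> \<delta> \<longleftrightarrow> (\<forall>x y. \<delta> (x + y) = \<delta> x + \<delta> y) \<and>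
     (\<forall>x y. \<delta> (x * y) = \<delta> x * y + \<sigma> x * \<delta> y)"

text \<open>Elements are coefficient sequences a, standing for the series sum of a n * Y^n.
  skew_coeff sigma delta n i r is the coefficient c(n,i)(r) in Y^n r = sum_i c(n,i)(r) Y^i,
  computed from Y r = sigma(r) Y + delta(r).\<close>
fun skew_coeff :: "('r::ring_1 \<Rightarrow> 'r) \<Rightarrow> ('r \<Rightarrow> 'r) \<Rightarrow> nat \<Rightarrow> nat \<Rightarrow> 'r \<Rightarrow> 'r" where
  "skew_coeff \<sigma> \<delta> 0 i r = (if i = 0 then r else 0)"
| "skew_coeff \<sigma> \<delta> (Suc n) i r =
     (case i of 0 \<Rightarrow> 0 | Suc j \<Rightarrow> \<sigma> (skew_coeff \<sigma> \<delta> n j r)) + \<delta> (skew_coeff \<sigma> \<delta> n i r)"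

type_synonym 'r sps = "nat \<Rightarrow> 'r"

definition sps_add :: "'r::ring_1 sps \<Rightarrow> 'r sps \<Rightarrow> 'r sps" where
  "sps_add a b = (\<lambda>k. a k + b k)"

definition sps_one :: "'r::ring_1 sps" where
  "sps_one = (\<lambda>k. if k = 0 then 1 else 0)"

definition sps_const :: "'r::ring_1 \<Rightarrow> 'r sps" where
  "sps_const r = (\<lambda>k. if k = 0 then r else 0)"

text \<open>(sum a_n Y^n)(sum b_m Y^m) = sum_{n,m,i} a_n c(n,i)(b_m) Y^(i+m); the inner sum over n
  is an infinite series, convergent in the (m-adic) topology of R.\<close>
definition sps_mult :: "('r::{ring_1,topological_space} \<Rightarrow> 'r) \<Rightarrow> ('r \<Rightarrow> 'r) \<Rightarrow> 'r sps \<Rightarrow> 'r sps \<Rightarrow> 'r sps" where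
  "sps_mult \<sigma> \<delta> a b = (\<lambda>k. \<Sum>m\<le>k. (\<Sum>n. a n * skew_coeff \<sigma> \<delta> n (k - m) (b m)))"

definition is_skew_poly :: "'r::ring_1 sps \<Rightarrow> bool" where
  "is_skew_poly a \<longleftrightarrow> finite {n. a n \<noteq> 0}"

text \<open>Left module over the ring of those series satisfying P (P = all series: A-module;
  P = is_skew_poly: B-module), acting on the whole type 'm.\<close>
definition sps_module ::
  "('r::{ring_1,topological_space} \<Rightarrow> 'r) \<Rightarrow> ('r \<Rightarrow> 'r) \<Rightarrow> ('r sps \<Rightarrow> bool)
     \<Rightarrow> ('r sps \<Rightarrow> 'm::ab_group_add \<Rightarrow> 'm) \<Rightarrow> bool" where
  "sps_module \<sigma> \<delta> P act \<longleftrightarrow>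
     (\<forall>a b x. P a \<and> P b \<longrightarrow> act (sps_add a b) x = act a x + act b x) \<and>
     (\<forall>a x y. P a \<longrightarrow> act a (x + y) = act a x + act a y) \<and>
     (\<forall>x. act sps_one x = x) \<and>
     (\<forall>a b x. P a \<and> P b \<longrightarrow> act (sps_mult \<sigma> \<delta> a b) x = act a (act b x))"

definition submodule :: "('r sps \<Rightarrow> bool) \<Rightarrow> ('r sps \<Rightarrow> 'm::ab_group_add \<Rightarrow> 'm) \<Rightarrow> 'm set \<Rightarrow> bool" where
  "submodule P act N \<longleftrightarrow> 0 \<in> N \<and> (\<forall>x\<in>N. \<forall>y\<in>N. x + y \<in> N) \<and>
     (\<forall>a. P a \<longrightarrow> (\<forall>x\<in>N. act a x \<in> N))"

definition fin_gen :: "('r sps \<Rightarrow> bool) \<Rightarrow> ('r sps \<Rightarrow> 'm::ab_group_add \<Rightarrow> 'm) \<Rightarrow> bool" where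
  "fin_gen P act \<longleftrightarrow> (\<exists>S. finite S \<and>
     (\<forall>x. \<exists>c. (\<forall>s\<in>S. P (c s)) \<and> x = (\<Sum>s\<in>S. act (c s) s)))"

definition is_const_sps :: "'r::ring_1 sps \<Rightarrow> bool" where
  "is_const_sps a \<longleftrightarrow> (\<exists>r. a = sps_const r)"

end

theory Submission
  imports Defs "HOL-Analysis.Analysis"
begin


lemma one_sided_unit:
  fixes x y :: "'r::ring_1"
  assumes L: "local_ring TYPE('r)" and xy: "x * y = 1"
  shows "y * x = 1"
proof (rule ccontr)
  assume ne: "y * x \<noteq> 1"
  define e where "e = y * x"
  have ee: "e * e = e"
  proof -
    have "e * e = y * (x * y) * x" unfolding e_def by (simp add: mult.assoc)
    then show ?thesis using xy e_def by simp
  qed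
  have "\<not> is_unit e"
  proof
    assume "is_unit e"
    then obtain u where u: "e * u = 1" unfolding is_unit_def by blast
    have "e = e * (e * u)" using u by simp
    also have "\<dots> = (e * e) * u" by (simp add: mult.assoc)
    also have "\<dots> = 1" using ee u by simp
    finally have "e = 1" .
    then show False using ne e_def by simp
  qed
  moreover have "\<not> is_unit (1 - e)"
  proof
    assume "is_unit (1 - e)"
    then obtain u where u: "(1 - e) * u = 1" unfolding is_unit_def by blast
    have ee': "(1 - e) * (1 - e) = 1 - e" using ee by (simp add: algebra_simps)
    have "1 - e = (1 - e) * ((1 - e) * u)" using u by simp
    also have "\<dots> = ((1 - e) * (1 - e)) * u" by (simp add: mult.assoc)
    also have "\<dots> = 1" using ee' u by simp
    finally have "1 - e = 1" .
    then have e0: "e = 0" by simp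
    have "y = y * (x * y)" using xy by simp
    also have "\<dots> = e * y" unfolding e_def by (simp add: mult.assoc)
    finally have "y = 0" using e0 by simp
    then show False using xy L unfolding local_ring_def by simp
  qed
  ultimately have "\<not> is_unit (e + (1 - e))" using L unfolding local_ring_def by blast
  moreover have "is_unit (1::'r)" unfolding is_unit_def by auto
  ultimately show False by simp
qed

lemma left_inv_unit:
  fixes x y :: "'r::ring_1"
  assumes L: "local_ring TYPE('r)" and "y * x = 1"
  shows "is_unit x"
  using one_sided_unit[OF L assms(2)] assms(2) unfolding is_unit_def by blast

lemma right_inv_unit:
  fixes x y :: "'r::ring_1"
  assumes L: "local_ring TYPE('r)" and "x * y = 1"
  shows "is_unit x"
  using one_sided_unit[OF L assms(2)] assms(2) unfolding is_unit_def by blast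

lemma max_ideal_iff: "x \<in> max_ideal \<longleftrightarrow> \<not> is_unit x"
  unfolding max_ideal_def by simp

lemma m_mult_left:
  fixes x r :: "'r::ring_1"
  assumes L: "local_ring TYPE('r)" and "x \<in> max_ideal"
  shows "r * x \<in> max_ideal"
proof -
  { assume "is_unit (r * x)"
    then obtain v where "v * (r * x) = 1" unfolding is_unit_def by blast
    then have "(v * r) * x = 1" by (simp add: mult.assoc)
    then have "is_unit x" by (rule left_inv_unit[OF L]) }
  then show ?thesis using assms by (auto simp: max_ideal_iff)
qed

lemma m_mult_right:
  fixes x r :: "'r::ring_1"
  assumes L: "local_ring TYPE('r)" and "x \<in> max_ideal"
  shows "x * r \<in> max_ideal"
proof -
  { assume "is_unit (x * r)"
    then obtain v where "(x * r) * v = 1" unfolding is_unit_def by blast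
    then have "x * (r * v) = 1" by (simp add: mult.assoc)
    then have "is_unit x" by (rule right_inv_unit[OF L]) }
  then show ?thesis using assms by (auto simp: max_ideal_iff)
qed

lemma m_add:
  fixes x y :: "'r::ring_1"
  assumes L: "local_ring TYPE('r)" and "x \<in> max_ideal" "y \<in> max_ideal"
  shows "x + y \<in> max_ideal"
  using assms unfolding local_ring_def max_ideal_iff by blast

lemma m_zero:
  assumes L: "local_ring TYPE('r::ring_1)"
  shows "(0::'r) \<in> max_ideal"
  using L unfolding local_ring_def max_ideal_iff is_unit_def by auto

lemma m_uminus:
  fixes x :: "'r::ring_1"
  assumes L: "local_ring TYPE('r)" and "x \<in> max_ideal"
  shows "- x \<in> max_ideal"
  using m_mult_left[OF L assms(2), of "-1"] by simp

lemma m_diff: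
  fixes x y :: "'r::ring_1"
  assumes L: "local_ring TYPE('r)" and "x \<in> max_ideal" "y \<in> max_ideal"
  shows "x - y \<in> max_ideal"
  using m_add[OF L assms(2) m_uminus[OF L assms(3)]] by simp

lemma m_sum:
  fixes f :: "'a \<Rightarrow> 'r::ring_1"
  assumes L: "local_ring TYPE('r)" and "\<And>i. i \<in> A \<Longrightarrow> f i \<in> max_ideal"
  shows "sum f A \<in> max_ideal"
  using assms(2)
  by (induction A rule: infinite_finite_induct) (auto simp: m_zero[OF L] m_add[OF L])

lemma one_notin_m: "(1::'r::ring_1) \<notin> max_ideal"
  by (simp add: max_ideal_iff is_unit_def)

lemma one_minus_m_unit:
  fixes a :: "'r::ring_1"
  assumes L: "local_ring TYPE('r)" and "a \<in> max_ideal"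
  shows "is_unit (1 - a)"
proof (rule ccontr)
  assume "\<not> is_unit (1 - a)"
  then have "1 - a \<in> max_ideal" by (simp add: max_ideal_iff)
  then have "(1 - a) + a \<in> max_ideal" using m_add[OF L _ assms(2)] by blast
  then show False using one_notin_m[where 'r='r] by simp
qed


definition lspan :: "'r::ring_1 set \<Rightarrow> 'r set" where
  "lspan G = {x. \<exists>c. x = (\<Sum>g\<in>G. c g * g)}"

definition rspan :: "'r::ring_1 set \<Rightarrow> 'r set" where
  "rspan G = {x. \<exists>c. x = (\<Sum>g\<in>G. g * c g)}"

lemma left_ideal_lspan: "left_ideal (lspan G)"
  unfolding left_ideal_def lspan_def
proof (intro conjI ballI allI)
  show "0 \<in> {x. \<exists>c. x = (\<Sum>g\<in>G. c g * g)}" by (rule CollectI, rule exI[of _ "\<lambda>_. 0"]) simp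
next
  fix x y assume "x \<in> {x. \<exists>c. x = (\<Sum>g\<in>G. c g * g)}" "y \<in> {x. \<exists>c. x = (\<Sum>g\<in>G. c g * g)}"
  then obtain c d where "x = (\<Sum>g\<in>G. c g * g)" "y = (\<Sum>g\<in>G. d g * g)" by blast
  then have "x + y = (\<Sum>g\<in>G. (c g + d g) * g)" by (simp add: sum.distrib distrib_right)
  then show "x + y \<in> {x. \<exists>c. x = (\<Sum>g\<in>G. c g * g)}" by (auto intro!: exI[of _ "\<lambda>g. c g + d g"])
next
  fix r x assume "x \<in> {x. \<exists>c. x = (\<Sum>g\<in>G. c g * g)}"
  then obtain c where "x = (\<Sum>g\<in>G. c g * g)" by blast
  then have "r * x = (\<Sum>g\<in>G. (r * c g) * g)" by (simp add: sum_distrib_left mult.assoc)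
  then show "r * x \<in> {x. \<exists>c. x = (\<Sum>g\<in>G. c g * g)}" by (auto intro!: exI[of _ "\<lambda>g. r * c g"])
qed

lemma right_ideal_rspan: "right_ideal (rspan G)"
  unfolding right_ideal_def rspan_def
proof (intro conjI ballI allI)
  show "0 \<in> {x. \<exists>c. x = (\<Sum>g\<in>G. g * c g)}" by (rule CollectI, rule exI[of _ "\<lambda>_. 0"]) simp
next
  fix x y assume "x \<in> {x. \<exists>c. x = (\<Sum>g\<in>G. g * c g)}" "y \<in> {x. \<exists>c. x = (\<Sum>g\<in>G. g * c g)}"
  then obtain c d where "x = (\<Sum>g\<in>G. g * c g)" "y = (\<Sum>g\<in>G. g * d g)" by blast
  then have "x + y = (\<Sum>g\<in>G. g * (c g + d g))" by (simp add: sum.distrib distrib_left)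
  then show "x + y \<in> {x. \<exists>c. x = (\<Sum>g\<in>G. g * c g)}" by (auto intro!: exI[of _ "\<lambda>g. c g + d g"])
next
  fix r x assume "x \<in> {x. \<exists>c. x = (\<Sum>g\<in>G. g * c g)}"
  then obtain c where "x = (\<Sum>g\<in>G. g * c g)" by blast
  then have "x * r = (\<Sum>g\<in>G. g * (c g * r))" by (simp add: sum_distrib_right mult.assoc)
  then show "x * r \<in> {x. \<exists>c. x = (\<Sum>g\<in>G. g * c g)}" by (auto intro!: exI[of _ "\<lambda>g. c g * r"])
qed

lemma lspan_mem: "finite G \<Longrightarrow> g \<in> G \<Longrightarrow> g \<in> lspan G"
proof -
  assume "finite G" "g \<in> G"
  have e: "(if h = g then 1 else 0) * h = (if h = g then h else 0)" for h :: 'a by simp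
  have "g = (\<Sum>h\<in>G. (if h = g then 1 else 0) * h)" unfolding e using \<open>finite G\<close> \<open>g \<in> G\<close> by (simp add: sum.delta')
  then show ?thesis unfolding lspan_def by (auto intro!: exI[of _ "\<lambda>h. if h = g then 1 else 0"])
qed

lemma rspan_mem: "finite G \<Longrightarrow> g \<in> G \<Longrightarrow> g \<in> rspan G"
proof -
  assume "finite G" "g \<in> G"
  have e: "h * (if h = g then 1 else 0) = (if h = g then h else 0)" for h :: 'a by simp
  have "g = (\<Sum>h\<in>G. h * (if h = g then 1 else 0))" unfolding e using \<open>finite G\<close> \<open>g \<in> G\<close> by (simp add: sum.delta')
  then show ?thesis unfolding rspan_def by (auto intro!: exI[of _ "\<lambda>h. if h = g then 1 else 0"])
qed

lemma lspan_subset: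
  assumes "left_ideal I" "G \<subseteq> I" shows "lspan G \<subseteq> I"
proof
  fix x assume "x \<in> lspan G"
  then obtain c where x: "x = (\<Sum>g\<in>G. c g * g)" unfolding lspan_def by blast
  have "(\<Sum>g\<in>G'. c g * g) \<in> I" if "G' \<subseteq> G" for G'
    using that
  proof (induction G' rule: infinite_finite_induct)
    case (infinite A) then show ?case using assms(1) unfolding left_ideal_def by simp
  next
    case empty then show ?case using assms(1) unfolding left_ideal_def by simp
  next
    case (insert a A) then show ?case using assms unfolding left_ideal_def by auto
  qed
  then show "x \<in> I" using x by blast
qed

lemma rspan_subset:
  assumes "right_ideal I" "G \<subseteq> I" shows "rspan G \<subseteq> I"
proof
  fix x assume "x \<in> rspan G"
  then obtain c where x: "x = (\<Sum>g\<in>G. g * c g)" unfolding rspan_def by blast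
  have "(\<Sum>g\<in>G'. g * c g) \<in> I" if "G' \<subseteq> G" for G'
    using that
  proof (induction G' rule: infinite_finite_induct)
    case (infinite A) then show ?case using assms(1) unfolding right_ideal_def by simp
  next
    case empty then show ?case using assms(1) unfolding right_ideal_def by simp
  next
    case (insert a A) then show ?case using assms unfolding right_ideal_def by auto
  qed
  then show "x \<in> I" using x by blast
qed

lemma lspan_mono: "finite G' \<Longrightarrow> G \<subseteq> G' \<Longrightarrow> lspan G \<subseteq> lspan G'"
  by (meson left_ideal_lspan lspan_mem lspan_subset subset_iff)

lemma rspan_mono: "finite G' \<Longrightarrow> G \<subseteq> G' \<Longrightarrow> rspan G \<subseteq> rspan G'"
  by (meson right_ideal_rspan rspan_mem rspan_subset subset_iff)

lemma noeth_left_fg: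
  fixes I :: "'r::ring_1 set"
  assumes N: "noetherian_ring TYPE('r)" and I: "left_ideal I"
  shows "\<exists>G. finite G \<and> G \<subseteq> I \<and> I = lspan G"
proof (rule ccontr)
  assume H: "\<not> ?thesis"
  have step: "\<exists>x. x \<in> I \<and> x \<notin> lspan G" if "finite G" "G \<subseteq> I" for G
  proof -
    have "lspan G \<subseteq> I" using lspan_subset[OF I that(2)] .
    moreover have "I \<noteq> lspan G" using H that by blast
    ultimately show ?thesis by blast
  qed
  define nx where "nx G = (SOME x. x \<in> I \<and> x \<notin> lspan G)" for G
  define Gs where "Gs = rec_nat {} (\<lambda>n G. insert (nx G) G)"
  have Gs0: "Gs 0 = {}" and GsS: "Gs (Suc n) = insert (nx (Gs n)) (Gs n)" for n
    unfolding Gs_def by simp_all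
  have fin: "finite (Gs n) \<and> Gs n \<subseteq> I" for n
  proof (induction n)
    case 0 then show ?case by (simp add: Gs0)
  next
    case (Suc n)
    then have "nx (Gs n) \<in> I" using step[of "Gs n"] unfolding nx_def by (metis (mono_tags, lifting) someI)
    then show ?case using Suc by (simp add: GsS)
  qed
  have new: "nx (Gs n) \<notin> lspan (Gs n)" for n
    using step[of "Gs n"] fin[of n] unfolding nx_def by (metis (mono_tags, lifting) someI)
  have chain: "\<forall>n. lspan (Gs n) \<subseteq> lspan (Gs (Suc n))"
    using lspan_mono fin GsS by (metis subset_insertI)
  have "\<exists>N. \<forall>n\<ge>N. lspan (Gs n) = lspan (Gs N)"
  proof -
    have A: "\<forall>I :: nat \<Rightarrow> 'r set. (\<forall>n. left_ideal (I n)) \<and> (\<forall>n. I n \<subseteq> I (Suc n))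
          \<longrightarrow> (\<exists>N. \<forall>n\<ge>N. I n = I N)" using N unfolding noetherian_ring_def by (elim conjE)
    have "\<forall>n. left_ideal (lspan (Gs n))" by (simp add: left_ideal_lspan)
    then show ?thesis using A[rule_format, of "\<lambda>n. lspan (Gs n)"] chain by blast
  qed
  then obtain N0 where "lspan (Gs (Suc N0)) = lspan (Gs N0)" by (meson le_SucI order_refl)
  moreover have "nx (Gs N0) \<in> lspan (Gs (Suc N0))"
    using fin[of "Suc N0"] unfolding GsS by (intro lspan_mem) auto
  ultimately show False using new by simp
qed

lemma noeth_right_fg:
  fixes I :: "'r::ring_1 set"
  assumes N: "noetherian_ring TYPE('r)" and I: "right_ideal I"
  shows "\<exists>G. finite G \<and> G \<subseteq> I \<and> I = rspan G"
proof (rule ccontr)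
  assume H: "\<not> ?thesis"
  have step: "\<exists>x. x \<in> I \<and> x \<notin> rspan G" if "finite G" "G \<subseteq> I" for G
  proof -
    have "rspan G \<subseteq> I" using rspan_subset[OF I that(2)] .
    moreover have "I \<noteq> rspan G" using H that by blast
    ultimately show ?thesis by blast
  qed
  define nx where "nx G = (SOME x. x \<in> I \<and> x \<notin> rspan G)" for G
  define Gs where "Gs = rec_nat {} (\<lambda>n G. insert (nx G) G)"
  have Gs0: "Gs 0 = {}" and GsS: "Gs (Suc n) = insert (nx (Gs n)) (Gs n)" for n
    unfolding Gs_def by simp_all
  have fin: "finite (Gs n) \<and> Gs n \<subseteq> I" for n
  proof (induction n)
    case 0 then show ?case by (simp add: Gs0)
  next
    case (Suc n)
    then have "nx (Gs n) \<in> I" using step[of "Gs n"] unfolding nx_def by (metis (mono_tags, lifting) someI)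
    then show ?case using Suc by (simp add: GsS)
  qed
  have new: "nx (Gs n) \<notin> rspan (Gs n)" for n
    using step[of "Gs n"] fin[of n] unfolding nx_def by (metis (mono_tags, lifting) someI)
  have chain: "\<forall>n. rspan (Gs n) \<subseteq> rspan (Gs (Suc n))"
    using rspan_mono fin GsS by (metis subset_insertI)
  have "\<exists>N. \<forall>n\<ge>N. rspan (Gs n) = rspan (Gs N)"
  proof -
    have A: "\<forall>I :: nat \<Rightarrow> 'r set. (\<forall>n. right_ideal (I n)) \<and> (\<forall>n. I n \<subseteq> I (Suc n))
          \<longrightarrow> (\<exists>N. \<forall>n\<ge>N. I n = I N)" using N unfolding noetherian_ring_def by (elim conjE)
    have "\<forall>n. right_ideal (rspan (Gs n))" by (simp add: right_ideal_rspan)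
    then show ?thesis using A[rule_format, of "\<lambda>n. rspan (Gs n)"] chain by blast
  qed
  then obtain N0 where "rspan (Gs (Suc N0)) = rspan (Gs N0)" by (meson le_SucI order_refl)
  moreover have "nx (Gs N0) \<in> rspan (Gs (Suc N0))"
    using fin[of "Suc N0"] unfolding GsS by (intro rspan_mem) auto
  ultimately show False using new by simp
qed


inductive_set iprod :: "'r::ring_1 set \<Rightarrow> 'r set \<Rightarrow> 'r set" for I K where
  ip0: "0 \<in> iprod I K"
| ipS: "x \<in> I \<Longrightarrow> y \<in> K \<Longrightarrow> s \<in> iprod I K \<Longrightarrow> x * y + s \<in> iprod I K"

lemma iprod_add: "a \<in> iprod I K \<Longrightarrow> b \<in> iprod I K \<Longrightarrow> a + b \<in> iprod I K"
proof (induction a rule: iprod.induct)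
  case ip0 then show ?case by simp
next
  case (ipS x y s) then show ?case using iprod.ipS[of x I y K "s + b"] by (simp add: add.assoc)
qed

lemma iprod_mono:
  assumes KK: "K \<subseteq> K'" shows "iprod I K \<subseteq> iprod I K'"
proof
  fix a assume "a \<in> iprod I K"
  then show "a \<in> iprod I K'" using KK by (induction a rule: iprod.induct) (auto intro: iprod.intros)
qed

primrec mp :: "nat \<Rightarrow> 'r::ring_1 set" where
  "mp 0 = UNIV"
| "mp (Suc j) = iprod max_ideal (mp j)"

definition tsideal :: "'r::ring_1 set \<Rightarrow> bool" where
  "tsideal I \<longleftrightarrow> 0 \<in> I \<and> (\<forall>a\<in>I. \<forall>b\<in>I. a + b \<in> I) \<and> (\<forall>r. \<forall>a\<in>I. r * a \<in> I \<and> a * r \<in> I)"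

lemma tsideal_neg: "tsideal I \<Longrightarrow> a \<in> I \<Longrightarrow> - a \<in> I"
proof -
  assume "tsideal I" "a \<in> I"
  then have "(- 1) * a \<in> I" unfolding tsideal_def by blast
  then show "- a \<in> I" by simp
qed

lemma tsideal_diff: "tsideal I \<Longrightarrow> a \<in> I \<Longrightarrow> b \<in> I \<Longrightarrow> a - b \<in> I"
  using tsideal_neg[of I b] unfolding tsideal_def by (simp only: diff_conv_add_uminus) blast

lemma tsideal_sum: "tsideal I \<Longrightarrow> (\<And>i. i \<in> A \<Longrightarrow> f i \<in> I) \<Longrightarrow> sum f A \<in> I"
  by (induction A rule: infinite_finite_induct) (auto simp: tsideal_def)

lemma tsideal_m: "local_ring TYPE('r::ring_1) \<Longrightarrow> tsideal (max_ideal :: 'r set)"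
  unfolding tsideal_def using m_zero m_add m_mult_left m_mult_right by blast

lemma tsideal_mp:
  assumes L: "local_ring TYPE('r::ring_1)"
  shows "tsideal (mp j :: 'r set)"
proof (induction j)
  case 0 then show ?case by (simp add: tsideal_def)
next
  case (Suc j)
  have left: "r * a \<in> iprod max_ideal (mp j)" if "a \<in> iprod max_ideal (mp j)" for r a :: 'r
    using that
  proof (induction a rule: iprod.induct)
    case ip0 then show ?case by (simp add: iprod.ip0)
  next
    case (ipS x y s)
    have "r * (x * y + s) = (r * x) * y + r * s" by (simp add: algebra_simps)
    then show ?case using ipS(4) m_mult_left[OF L ipS(1), of r] iprod.ipS[of "r * x" max_ideal y "mp j" "r * s"] ipS(2) by simp
  qed
  have right: "a * r \<in> iprod max_ideal (mp j)" if "a \<in> iprod max_ideal (mp j)" for r a :: 'r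
    using that
  proof (induction a rule: iprod.induct)
    case ip0 then show ?case by (simp add: iprod.ip0)
  next
    case (ipS x y s)
    have "(x * y + s) * r = x * (y * r) + s * r" by (simp add: algebra_simps)
    moreover have "y * r \<in> mp j" using Suc ipS(2) unfolding tsideal_def by blast
    ultimately show ?case using ipS(4) iprod.ipS[of x max_ideal "y * r" "mp j" "s * r"] ipS(1) by simp
  qed
  show ?case unfolding tsideal_def using left right iprod_add iprod.ip0 by auto
qed

lemma mp_1: "local_ring TYPE('r::ring_1) \<Longrightarrow> mp 1 = (max_ideal :: 'r set)"
proof
  assume L: "local_ring TYPE('r)"
  show "mp 1 \<subseteq> (max_ideal :: 'r set)"
  proof
    fix a :: 'r assume "a \<in> mp 1"
    then have "a \<in> iprod max_ideal UNIV" by simp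
    then show "a \<in> max_ideal"
      by (induction a rule: iprod.induct) (auto simp: m_zero[OF L] m_add[OF L] m_mult_right[OF L])
  qed
  show "(max_ideal :: 'r set) \<subseteq> mp 1"
  proof
    fix a :: 'r assume "a \<in> max_ideal"
    then have "a * 1 + 0 \<in> iprod max_ideal UNIV" by (intro iprod.intros) auto
    then show "a \<in> mp 1" by simp
  qed
qed

lemma mp_Suc_sub: "mp (Suc j) \<subseteq> (mp j :: 'r::ring_1 set)"
proof (induction j)
  case 0 then show ?case by simp
next
  case (Suc j) then show ?case by (simp add: iprod_mono)
qed

lemma mp_anti: "j \<le> k \<Longrightarrow> mp k \<subseteq> (mp j :: 'r::ring_1 set)"
proof (induction k)
  case 0 then show ?case by simp
next
  case (Suc k)
  show ?case
  proof (cases "j = Suc k")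
    case True then show ?thesis by simp
  next
    case False then have "j \<le> k" using Suc.prems by simp
    then show ?thesis using Suc.IH mp_Suc_sub[of k] by blast
  qed
qed

lemma mp_mult:
  assumes L: "local_ring TYPE('r::ring_1)"
  shows "a \<in> mp i \<Longrightarrow> b \<in> mp j \<Longrightarrow> a * b \<in> (mp (i + j) :: 'r set)"
proof (induction i arbitrary: a)
  case 0 then show ?case using tsideal_mp[OF L, of j] unfolding tsideal_def by simp
next
  case (Suc i)
  from Suc.prems(1) have "a \<in> iprod max_ideal (mp i)" by simp
  then have "a * b \<in> iprod max_ideal (mp (i + j))"
  proof (induction a rule: iprod.induct)
    case ip0 then show ?case by (simp add: iprod.ip0)
  next
    case (ipS x y s)
    have "(x * y + s) * b = x * (y * b) + s * b" by (simp add: algebra_simps)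
    moreover have "y * b \<in> mp (i + j)" using Suc.IH[OF ipS(2) Suc.prems(2)] .
    ultimately show ?case using ipS(4) iprod.ipS[of x max_ideal "y * b" "mp (i + j)" "s * b"] ipS(1) by simp
  qed
  then show ?case by simp
qed

lemma ideal_sq_mp2:
  assumes L: "local_ring TYPE('r::ring_1)"
  shows "ideal_sq max_ideal \<subseteq> (mp 2 :: 'r set)"
proof
  fix s :: 'r assume "s \<in> ideal_sq max_ideal"
  then obtain n :: nat and xs ys where H: "\<forall>i<n. xs i \<in> max_ideal \<and> ys i \<in> max_ideal" and s: "s = (\<Sum>i<n. xs i * ys i)"
    by (auto simp: ideal_sq_def)
  have "xs i * ys i \<in> mp 2" if "i < n" for i
  proof -
    have "ys i \<in> mp 1" using H that mp_1[OF L] by auto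
    then have "xs i * ys i + 0 \<in> iprod max_ideal (mp 1)" using H that by (intro iprod.intros) auto
    then show ?thesis by (simp add: numeral_2_eq_2)
  qed
  then show "s \<in> mp 2" unfolding s by (intro tsideal_sum[OF tsideal_mp[OF L]]) auto
qed

locale Rctx =
  fixes \<sigma> \<delta> :: "'r::{ring_1, topological_ab_group_add, topological_semigroup_mult, t2_space} \<Rightarrow> 'r"
  assumes compactR: "compact (UNIV :: 'r set)"
    and noethR: "noetherian_ring TYPE('r)"
    and localR: "local_ring TYPE('r)"
    and sigma_aut: "ring_automorphism \<sigma>"
    and sigma_m: "\<sigma> ` max_ideal = max_ideal"
    and delta_der: "sigma_derivation \<sigma> \<delta>"
    and delta_R: "range \<delta> \<subseteq> max_ideal"
    and delta_m: "\<delta> ` max_ideal \<subseteq> ideal_sq max_ideal"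
begin

lemma sigma_add: "\<sigma> (x + y) = \<sigma> x + \<sigma> y" using sigma_aut unfolding ring_automorphism_def by blast
lemma sigma_mult: "\<sigma> (x * y) = \<sigma> x * \<sigma> y" using sigma_aut unfolding ring_automorphism_def by blast
lemma sigma_one: "\<sigma> 1 = 1" using sigma_aut unfolding ring_automorphism_def by blast
lemma sigma_zero: "\<sigma> 0 = 0" using sigma_add[of 0 0] by simp
lemma sigma_neg: "\<sigma> (- x) = - \<sigma> x"
proof -
  have "\<sigma> x + \<sigma> (- x) = 0" using sigma_add[of x "- x"] sigma_zero by simp
  then show ?thesis using neg_eq_iff_add_eq_0[of "\<sigma> x" "\<sigma> (- x)"] by simp
qed
lemma delta_add: "\<delta> (x + y) = \<delta> x + \<delta> y" using delta_der unfolding sigma_derivation_def by blast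
lemma delta_mult: "\<delta> (x * y) = \<delta> x * y + \<sigma> x * \<delta> y" using delta_der unfolding sigma_derivation_def by blast
lemma delta_zero: "\<delta> 0 = 0" using delta_add[of 0 0] by simp
lemma delta_neg: "\<delta> (- x) = - \<delta> x"
proof -
  have "\<delta> x + \<delta> (- x) = 0" using delta_add[of x "- x"] delta_zero by simp
  then show ?thesis using neg_eq_iff_add_eq_0[of "\<delta> x" "\<delta> (- x)"] by simp
qed
lemma delta_one: "\<delta> 1 = 0" using delta_mult[of 1 1] sigma_one by simp
lemma sigma_m1: "\<sigma> (- 1) = - 1" using sigma_neg sigma_one by simp
lemma delta_m1: "\<delta> (- 1) = 0" using delta_neg delta_one by simp

lemma sigma_mp: "x \<in> mp j \<Longrightarrow> \<sigma> x \<in> mp j"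
proof (induction j arbitrary: x)
  case 0 then show ?case by simp
next
  case (Suc j)
  from Suc.prems have "x \<in> iprod max_ideal (mp j)" by simp
  then have "\<sigma> x \<in> iprod max_ideal (mp j)"
  proof (induction x rule: iprod.induct)
    case ip0 then show ?case by (simp add: sigma_zero iprod.ip0)
  next
    case (ipS x y s)
    have "\<sigma> x \<in> max_ideal" using ipS(1) sigma_m by blast
    then show ?case using ipS Suc.IH by (simp add: sigma_add sigma_mult iprod.ipS)
  qed
  then show ?case by simp
qed

lemma delta_mp: "x \<in> mp j \<Longrightarrow> \<delta> x \<in> mp (Suc j)"
proof (induction j arbitrary: x)
  case 0 then show ?case using delta_R mp_1[OF localR] by auto
next
  case (Suc j)
  from Suc.prems have "x \<in> iprod max_ideal (mp j)" by simp
  then have "\<delta> x \<in> mp (Suc (Suc j))"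
  proof (induction x rule: iprod.induct)
    case ip0 then show ?case by (simp add: delta_zero iprod.ip0)
  next
    case (ipS x y s)
    have "\<delta> x \<in> mp 2" using ipS(1) delta_m ideal_sq_mp2[OF localR] by blast
    then have a: "\<delta> x * y \<in> mp (Suc (Suc j))" using mp_mult[OF localR _ ipS(2)] by fastforce
    have "\<sigma> x \<in> max_ideal" using ipS(1) sigma_m by blast
    then have "\<sigma> x \<in> mp 1" using mp_1[OF localR] by simp
    then have b: "\<sigma> x * \<delta> y \<in> mp (Suc (Suc j))" using mp_mult[OF localR _ Suc.IH[OF ipS(2)]] by fastforce
    show ?case using a b ipS(4) tsideal_mp[OF localR, of "Suc (Suc j)"]
      unfolding tsideal_def by (simp add: delta_add delta_mult)
  qed
  then show ?case .
qed

lemma sc_zero: "skew_coeff \<sigma> \<delta> n i 0 = 0"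
proof (induction n arbitrary: i)
  case 0 then show ?case by simp
next
  case (Suc n) then show ?case by (cases i) (simp_all add: sigma_zero delta_zero)
qed

lemma sc_add: "skew_coeff \<sigma> \<delta> n i (r + s) = skew_coeff \<sigma> \<delta> n i r + skew_coeff \<sigma> \<delta> n i s"
proof (induction n arbitrary: i)
  case 0 then show ?case by simp
next
  case (Suc n) then show ?case by (cases i) (simp_all add: sigma_add delta_add add_ac)
qed

lemma sc_fixed: "\<sigma> r = r \<Longrightarrow> \<delta> r = 0 \<Longrightarrow> skew_coeff \<sigma> \<delta> n i r = (if i = n then r else 0)"
proof (induction n arbitrary: i)
  case 0 then show ?case by simp
next
  case (Suc n) then show ?case by (cases i) (simp_all add: sigma_zero delta_zero)
qed

lemma sc_mp: "skew_coeff \<sigma> \<delta> n i r \<in> mp (n - i)"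
proof (induction n arbitrary: i)
  case 0 then show ?case by simp
next
  case (Suc n)
  have T: "tsideal (mp (Suc n - i) :: 'r set)" by (rule tsideal_mp[OF localR])
  show ?case
  proof (cases i)
    case 0
    then show ?thesis using delta_mp[OF Suc.IH[of 0]] by simp
  next
    case (Suc j)
    have a: "\<sigma> (skew_coeff \<sigma> \<delta> n j r) \<in> mp (Suc n - i)" using sigma_mp[OF Suc.IH[of j]] Suc by simp
    have "\<delta> (skew_coeff \<sigma> \<delta> n i r) \<in> mp (Suc (n - i))" using delta_mp[OF Suc.IH[of i]] .
    moreover have "mp (Suc (n - i)) \<subseteq> mp (Suc n - i)" by (rule mp_anti) simp
    ultimately have b: "\<delta> (skew_coeff \<sigma> \<delta> n i r) \<in> mp (Suc n - i)" by blast
    show ?thesis using a b T Suc unfolding tsideal_def by simp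
  qed
qed

lemma sc_m: "r \<in> max_ideal \<Longrightarrow> skew_coeff \<sigma> \<delta> n i r \<in> max_ideal"
proof (induction n arbitrary: i)
  case 0 then show ?case by (simp add: m_zero[OF localR])
next
  case (Suc n)
  have d: "\<delta> (skew_coeff \<sigma> \<delta> n i r) \<in> max_ideal" using delta_R by blast
  show ?case
  proof (cases i)
    case 0 then show ?thesis using d by (simp add: m_zero[OF localR])
  next
    case (Suc j)
    have "\<sigma> (skew_coeff \<sigma> \<delta> n j r) \<in> max_ideal" using Suc.IH[OF Suc.prems] sigma_m by blast
    then show ?thesis using d Suc m_add[OF localR] by simp
  qed
qed

end


definition splus :: "'m::ab_group_add set \<Rightarrow> 'm set \<Rightarrow> 'm set" where
  "splus A B = {x. \<exists>a b. a \<in> A \<and> b \<in> B \<and> x = a + b}"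

locale lmod =
  fixes smul :: "'r::ring_1 \<Rightarrow> 'm::ab_group_add \<Rightarrow> 'm"
  assumes smul_add_l: "smul (r + s) x = smul r x + smul s x"
    and smul_add_r: "smul r (x + y) = smul r x + smul r y"
    and smul_assoc: "smul (r * s) x = smul r (smul s x)"
    and smul_one: "smul 1 x = x"
begin

lemma smul_zero_l: "smul 0 x = 0"
  using smul_add_l[of 0 0 x] by simp

lemma smul_zero_r: "smul r 0 = 0"
  using smul_add_r[of r 0 0] by simp

lemma smul_neg_l: "smul (- r) x = - smul r x"
proof -
  have "smul r x + smul (- r) x = 0" using smul_add_l[of r "- r" x] smul_zero_l by simp
  then show ?thesis using neg_eq_iff_add_eq_0[of "smul r x" "smul (- r) x"] by simp
qed

lemma smul_neg_r: "smul r (- x) = - smul r x"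
proof -
  have "smul r x + smul r (- x) = 0" using smul_add_r[of r x "- x"] smul_zero_r by simp
  then show ?thesis using neg_eq_iff_add_eq_0[of "smul r x" "smul r (- x)"] by simp
qed

lemma smul_diff_r: "smul r (x - y) = smul r x - smul r y"
  using smul_add_r[of r x "- y"] smul_neg_r by simp

lemma smul_diff_l: "smul (r - s) x = smul r x - smul s x"
  using smul_add_l[of r "- s" x] smul_neg_l by simp

lemma smul_sum_r: "smul r (sum f A) = (\<Sum>a\<in>A. smul r (f a))"
  by (induction A rule: infinite_finite_induct) (simp_all add: smul_zero_r smul_add_r)

lemma smul_sum_l: "smul (sum f A) x = (\<Sum>a\<in>A. smul (f a) x)"
  by (induction A rule: infinite_finite_induct) (simp_all add: smul_zero_l smul_add_l)

definition span :: "'m set \<Rightarrow> 'm set" where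
  "span G = {x. \<exists>c. x = (\<Sum>g\<in>G. smul (c g) g)}"

definition submod :: "'m set \<Rightarrow> bool" where
  "submod L \<longleftrightarrow> 0 \<in> L \<and> (\<forall>x\<in>L. \<forall>y\<in>L. x + y \<in> L) \<and> (\<forall>r. \<forall>x\<in>L. smul r x \<in> L)"

lemma submod_neg: "submod L \<Longrightarrow> x \<in> L \<Longrightarrow> - x \<in> L"
proof -
  assume "submod L" "x \<in> L"
  then have "smul (- 1) x \<in> L" unfolding submod_def by blast
  then show "- x \<in> L" using smul_neg_l[of 1 x] smul_one[of x] by simp
qed

lemma submod_diff: "submod L \<Longrightarrow> x \<in> L \<Longrightarrow> y \<in> L \<Longrightarrow> x - y \<in> L"
  using submod_neg[of L y] unfolding submod_def by (simp only: diff_conv_add_uminus) blast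

lemma submod_add: "submod L \<Longrightarrow> x \<in> L \<Longrightarrow> y \<in> L \<Longrightarrow> x + y \<in> L"
  unfolding submod_def by blast

lemma submod_smul: "submod L \<Longrightarrow> x \<in> L \<Longrightarrow> smul r x \<in> L"
  unfolding submod_def by blast

lemma submod_zero: "submod L \<Longrightarrow> 0 \<in> L"
  unfolding submod_def by blast

lemma submod_sum: "submod L \<Longrightarrow> (\<And>i. i \<in> A \<Longrightarrow> f i \<in> L) \<Longrightarrow> sum f A \<in> L"
  by (induction A rule: infinite_finite_induct) (auto simp: submod_def)

lemma submod_span: "submod (span G)"
  unfolding submod_def span_def
proof (intro conjI ballI allI)
  show "0 \<in> {x. \<exists>c. x = (\<Sum>g\<in>G. smul (c g) g)}"
    by (auto intro!: exI[of _ "\<lambda>_. 0"] simp: smul_zero_l)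
next
  fix x y assume "x \<in> {x. \<exists>c. x = (\<Sum>g\<in>G. smul (c g) g)}" "y \<in> {x. \<exists>c. x = (\<Sum>g\<in>G. smul (c g) g)}"
  then obtain c d where "x = (\<Sum>g\<in>G. smul (c g) g)" "y = (\<Sum>g\<in>G. smul (d g) g)" by blast
  then have "x + y = (\<Sum>g\<in>G. smul (c g + d g) g)" by (simp add: sum.distrib smul_add_l)
  then show "x + y \<in> {x. \<exists>c. x = (\<Sum>g\<in>G. smul (c g) g)}" by (auto intro!: exI[of _ "\<lambda>g. c g + d g"])
next
  fix r x assume "x \<in> {x. \<exists>c. x = (\<Sum>g\<in>G. smul (c g) g)}"
  then obtain c where "x = (\<Sum>g\<in>G. smul (c g) g)" by blast
  then have "smul r x = (\<Sum>g\<in>G. smul (r * c g) g)" by (simp add: smul_sum_r smul_assoc)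
  then show "smul r x \<in> {x. \<exists>c. x = (\<Sum>g\<in>G. smul (c g) g)}" by (auto intro!: exI[of _ "\<lambda>g. r * c g"])
qed

lemma span_mem: "finite G \<Longrightarrow> g \<in> G \<Longrightarrow> g \<in> span G"
proof -
  assume "finite G" "g \<in> G"
  have e: "smul (if h = g then 1 else 0) h = (if h = g then h else 0)" for h
    by (simp add: smul_one smul_zero_l)
  have "g = (\<Sum>h\<in>G. smul (if h = g then 1 else 0) h)" unfolding e using \<open>finite G\<close> \<open>g \<in> G\<close>
    by (simp add: sum.delta')
  then show ?thesis unfolding span_def by (auto intro!: exI[of _ "\<lambda>h. if h = g then 1 else 0"])
qed

lemma span_subset: "submod L \<Longrightarrow> G \<subseteq> L \<Longrightarrow> span G \<subseteq> L"
proof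
  fix x assume L: "submod L" "G \<subseteq> L" and "x \<in> span G"
  then obtain c where x: "x = (\<Sum>g\<in>G. smul (c g) g)" unfolding span_def by blast
  show "x \<in> L" unfolding x using L by (intro submod_sum) (auto intro: submod_smul)
qed

lemma span_empty: "span {} = {0}"
  unfolding span_def by simp

lemma span_insert_decomp:
  assumes "finite S" "s \<notin> S" "x \<in> span (insert s S)"
  shows "\<exists>r y. y \<in> span S \<and> x = smul r s + y"
proof -
  obtain c where "x = (\<Sum>g\<in>insert s S. smul (c g) g)" using assms(3) unfolding span_def by blast
  then have "x = smul (c s) s + (\<Sum>g\<in>S. smul (c g) g)" using assms(1,2) by simp
  moreover have "(\<Sum>g\<in>S. smul (c g) g) \<in> span S" unfolding span_def by blast
  ultimately show ?thesis by blast
qed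

lemma submod_splus: "submod A \<Longrightarrow> submod B \<Longrightarrow> submod (splus A B)"
  unfolding submod_def splus_def
proof (intro conjI ballI allI)
  assume A: "0 \<in> A \<and> (\<forall>x\<in>A. \<forall>y\<in>A. x + y \<in> A) \<and> (\<forall>r. \<forall>x\<in>A. smul r x \<in> A)"
     and B: "0 \<in> B \<and> (\<forall>x\<in>B. \<forall>y\<in>B. x + y \<in> B) \<and> (\<forall>r. \<forall>x\<in>B. smul r x \<in> B)"
  show "0 \<in> {x. \<exists>a b. a \<in> A \<and> b \<in> B \<and> x = a + b}" using A B by force
  fix x y assume "x \<in> {x. \<exists>a b. a \<in> A \<and> b \<in> B \<and> x = a + b}" "y \<in> {x. \<exists>a b. a \<in> A \<and> b \<in> B \<and> x = a + b}"
  then obtain a b a' b' where "a \<in> A" "b \<in> B" "x = a + b" "a' \<in> A" "b' \<in> B" "y = a' + b'" by blast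
  then show "x + y \<in> {x. \<exists>a b. a \<in> A \<and> b \<in> B \<and> x = a + b}" using A B
    by (intro CollectI exI[of _ "a + a'"] exI[of _ "b + b'"]) (simp add: add_ac)
next
  fix r x
  assume A: "0 \<in> A \<and> (\<forall>x\<in>A. \<forall>y\<in>A. x + y \<in> A) \<and> (\<forall>r. \<forall>x\<in>A. smul r x \<in> A)"
     and B: "0 \<in> B \<and> (\<forall>x\<in>B. \<forall>y\<in>B. x + y \<in> B) \<and> (\<forall>r. \<forall>x\<in>B. smul r x \<in> B)"
     and "x \<in> {x. \<exists>a b. a \<in> A \<and> b \<in> B \<and> x = a + b}"
  then obtain a b where "a \<in> A" "b \<in> B" "x = a + b" by blast
  then show "smul r x \<in> {x. \<exists>a b. a \<in> A \<and> b \<in> B \<and> x = a + b}" using A B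
    by (intro CollectI exI[of _ "smul r a"] exI[of _ "smul r b"]) (simp add: smul_add_r)
qed

inductive_set msub :: "'m set \<Rightarrow> 'm set" for W where
  ms0: "0 \<in> msub W"
| msS: "r \<in> max_ideal \<Longrightarrow> w \<in> W \<Longrightarrow> s \<in> msub W \<Longrightarrow> smul r w + s \<in> msub W"

lemma msub_add: "a \<in> msub W \<Longrightarrow> b \<in> msub W \<Longrightarrow> a + b \<in> msub W"
proof (induction a rule: msub.induct)
  case ms0 then show ?case by simp
next
  case (msS r w s) then show ?case using msub.msS[of r w W "s + b"] by (simp add: add.assoc)
qed

lemma msub_single: "r \<in> max_ideal \<Longrightarrow> w \<in> W \<Longrightarrow> smul r w \<in> msub W"
  using msub.msS[of r w W 0] msub.ms0 by simp

lemma msub_mono: assumes "W \<subseteq> W'" shows "msub W \<subseteq> msub W'"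
proof
  fix a assume "a \<in> msub W" then show "a \<in> msub W'" using assms
    by (induction a rule: msub.induct) (auto intro: msub.intros)
qed

lemma msub_sub: assumes "submod W" shows "msub W \<subseteq> W"
proof
  fix a assume "a \<in> msub W" then show "a \<in> W" using assms
    by (induction a rule: msub.induct) (auto intro: submod_add submod_smul submod_zero)
qed

lemma msub_smul:
  assumes L: "local_ring TYPE('r)"
  shows "a \<in> msub W \<Longrightarrow> smul t a \<in> msub W"
proof (induction a rule: msub.induct)
  case ms0 then show ?case by (simp add: smul_zero_r msub.ms0)
next
  case (msS r w s)
  have "smul t (smul r w + s) = smul (t * r) w + smul t s" by (simp add: smul_add_r smul_assoc)
  moreover have "t * r \<in> max_ideal" using m_mult_left[OF L msS(1)] .
  ultimately show ?case using msS msub.msS by simp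
qed

lemma submod_msub: "local_ring TYPE('r) \<Longrightarrow> submod (msub W)"
  unfolding submod_def using msub.ms0 msub_add msub_smul by blast

lemma msub_sum: "(\<And>i. i \<in> A \<Longrightarrow> f i \<in> msub W) \<Longrightarrow> sum f A \<in> msub W"
  by (induction A rule: infinite_finite_induct) (auto intro: msub_add msub.ms0)

lemma msub_splus:
  assumes L: "local_ring TYPE('r)" and N: "submod N"
  shows "msub (splus N W) \<subseteq> splus N (msub W)"
proof
  fix a assume "a \<in> msub (splus N W)"
  then show "a \<in> splus N (msub W)"
  proof (induction a rule: msub.induct)
    case ms0 then show ?case unfolding splus_def using submod_zero[OF N] msub.ms0 by force
  next
    case (msS r w s)
    obtain l v where lv: "l \<in> N" "v \<in> W" "w = l + v" using msS(2) unfolding splus_def by blast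
    obtain l' v' where lv': "l' \<in> N" "v' \<in> msub W" "s = l' + v'" using msS(4) unfolding splus_def by blast
    have "smul r w + s = (smul r l + l') + (smul r v + v')" using lv lv' by (simp add: smul_add_r add_ac)
    moreover have "smul r l + l' \<in> N" using N lv lv' by (intro submod_add submod_smul)
    moreover have "smul r v + v' \<in> msub W" using msS(1) lv lv' by (intro msub.msS)
    ultimately show ?case unfolding splus_def by blast
  qed
qed

lemma msub_coeffs:
  assumes L: "local_ring TYPE('r)" and y: "y \<in> msub (span G)"
  shows "\<exists>a. (\<forall>g. a g \<in> max_ideal) \<and> y = (\<Sum>g\<in>G. smul (a g) g)"
  using y
proof (induction y rule: msub.induct)
  case ms0 then show ?case by (intro exI[of _ "\<lambda>_. 0"]) (simp add: smul_zero_l m_zero[OF L])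
next
  case (msS r w s)
  obtain c where c: "w = (\<Sum>g\<in>G. smul (c g) g)" using msS(2) unfolding span_def by blast
  obtain a where a: "\<forall>g. a g \<in> max_ideal" "s = (\<Sum>g\<in>G. smul (a g) g)" using msS(4) by blast
  have "smul r w + s = (\<Sum>g\<in>G. smul (r * c g + a g) g)"
    unfolding c a by (simp add: smul_sum_r smul_assoc smul_add_l sum.distrib)
  moreover have "\<forall>g. r * c g + a g \<in> max_ideal"
    using a msS(1) m_add[OF L] m_mult_right[OF L] by blast
  ultimately show ?case by (intro exI[of _ "\<lambda>g. r * c g + a g"]) simp
qed

lemma nakayama:
  assumes L: "local_ring TYPE('r)" and fin: "finite G" and N: "submod N"
    and H: "span G \<subseteq> splus N (msub (span G))"
  shows "span G \<subseteq> N"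
  using fin H
proof (induction G rule: finite_induct)
  case empty then show ?case using span_empty submod_zero[OF N] by simp
next
  case (insert h G)
  define G0 where "G0 = insert h G"
  have fin0: "finite G0" using insert G0_def by simp
  have hin: "h \<in> span G0" using span_mem[OF fin0] G0_def by simp
  then obtain l y where ly: "l \<in> N" "y \<in> msub (span G0)" "h = l + y"
    using insert.prems G0_def unfolding splus_def by blast
  obtain a where a: "\<forall>g. a g \<in> max_ideal" "y = (\<Sum>g\<in>G0. smul (a g) g)"
    using msub_coeffs[OF L ly(2)] by blast
  have y2: "y = smul (a h) h + (\<Sum>g\<in>G. smul (a g) g)" using a(2) G0_def insert by simp
  define z where "z = (\<Sum>g\<in>G. smul (a g) g)"
  have zspan: "z \<in> span G" unfolding z_def span_def by blast
  have e: "h = l + (smul (a h) h + z)" using ly(3) y2 z_def by simp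
  have "smul (1 - a h) h = h - smul (a h) h" by (simp add: smul_diff_l smul_one)
  also have "\<dots> = (l + (smul (a h) h + z)) - smul (a h) h" using arg_cong[OF e, of "\<lambda>t. t - smul (a h) h"] .
  also have "\<dots> = l + z" by (simp add: algebra_simps)
  finally have "smul (1 - a h) h = l + z" .
  obtain u where u: "u * (1 - a h) = 1" using one_minus_m_unit[OF L a(1)[rule_format, of h]]
    unfolding is_unit_def by blast
  have "h = smul (u * (1 - a h)) h" using u smul_one by simp
  also have "\<dots> = smul u (smul (1 - a h) h)" by (rule smul_assoc)
  finally have "h = smul u (l + z)" using \<open>smul (1 - a h) h = l + z\<close> by simp
  then have "h = smul u l + smul u z" by (simp add: smul_add_r)
  moreover have "smul u l \<in> N" using N ly(1) by (rule submod_smul)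
  moreover have "smul u z \<in> span G" using submod_span zspan by (rule submod_smul)
  ultimately have hN: "h \<in> splus N (span G)" unfolding splus_def by blast
  have sub0: "submod (splus N (span G))" using submod_splus[OF N submod_span] .
  have G0sub: "G0 \<subseteq> splus N (span G)"
  proof
    fix g assume "g \<in> G0"
    show "g \<in> splus N (span G)"
    proof (cases "g = h")
      case True then show ?thesis using hN by simp
    next
      case False
      then have "g \<in> span G" using \<open>g \<in> G0\<close> G0_def span_mem insert by auto
      then show ?thesis unfolding splus_def using submod_zero[OF N] by force
    qed
  qed
  have spG0: "span G0 \<subseteq> splus N (span G)" using span_subset[OF sub0 G0sub] .
  have "span G \<subseteq> splus N (msub (span G))"
  proof
    fix x assume "x \<in> span G"
    then have "x \<in> span G0" using span_subset[OF submod_span, of G G0] span_mem[OF fin0] G0_def by blast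
    then obtain l1 y1 where l1: "l1 \<in> N" "y1 \<in> msub (span G0)" "x = l1 + y1"
      using insert.prems G0_def unfolding splus_def by blast
    have "y1 \<in> msub (splus N (span G))" using msub_mono[OF spG0] l1(2) by blast
    then have "y1 \<in> splus N (msub (span G))" using msub_splus[OF L N] by blast
    then obtain l2 y2 where "l2 \<in> N" "y2 \<in> msub (span G)" "y1 = l2 + y2" unfolding splus_def by blast
    then have "x = (l1 + l2) + y2" "l1 + l2 \<in> N" using l1 N by (simp_all add: add_ac submod_add)
    then show "x \<in> splus N (msub (span G))" using \<open>y2 \<in> msub (span G)\<close> unfolding splus_def by blast
  qed
  then have "span G \<subseteq> N" by (rule insert.IH)
  then have "splus N (span G) \<subseteq> N" unfolding splus_def using N submod_add by blast
  then show ?case using spG0 G0_def by blast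
qed

lemma noeth_submod:
  assumes NR: "noetherian_ring TYPE('r)" and fin: "finite S"
  shows "submod N \<Longrightarrow> N \<subseteq> span S \<Longrightarrow> \<exists>G. finite G \<and> G \<subseteq> N \<and> N = span G"
  using fin
proof (induction S arbitrary: N rule: finite_induct)
  case empty
  have "0 \<in> N" using submod_zero[OF empty(1)] .
  then have "N = {0}" using empty(2) span_empty by auto
  then show ?case using span_empty by (intro exI[of _ "{}"]) simp
next
  case (insert s S)
  have N: "submod N" by fact
  define N' where "N' = N \<inter> span S"
  have "submod N'" unfolding N'_def using N submod_span[of S] unfolding submod_def by blast
  then obtain G' where G': "finite G'" "G' \<subseteq> N'" "N' = span G'" using insert.IH[of N'] N'_def by blast
  define I where "I = {r. \<exists>y\<in>span S. smul r s + y \<in> N}"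
  have "left_ideal I" unfolding left_ideal_def
  proof (intro conjI ballI allI)
    show "0 \<in> I" unfolding I_def using submod_zero[OF submod_span, of S] submod_zero[OF N]
      by (auto simp: smul_zero_l)
  next
    fix x y assume "x \<in> I" "y \<in> I"
    then obtain a b where ab: "a \<in> span S" "smul x s + a \<in> N" "b \<in> span S" "smul y s + b \<in> N"
      unfolding I_def by blast
    then have "smul (x + y) s + (a + b) \<in> N" using submod_add[OF N ab(2) ab(4)]
      by (simp add: smul_add_l add_ac)
    moreover have "a + b \<in> span S" using submod_add[OF submod_span ab(1) ab(3)] .
    ultimately show "x + y \<in> I" unfolding I_def by blast
  next
    fix r x assume "x \<in> I"
    then obtain a where a: "a \<in> span S" "smul x s + a \<in> N" unfolding I_def by blast
    then have "smul (r * x) s + smul r a \<in> N" using submod_smul[OF N a(2), of r]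
      by (simp add: smul_add_r smul_assoc)
    moreover have "smul r a \<in> span S" using submod_smul[OF submod_span a(1)] .
    ultimately show "r * x \<in> I" unfolding I_def by blast
  qed
  then obtain H where H: "finite H" "H \<subseteq> I" "I = lspan H" using noeth_left_fg[OF NR] by blast
  have "\<forall>h\<in>H. \<exists>y. y \<in> span S \<and> smul h s + y \<in> N" using H(2) unfolding I_def by blast
  then obtain yh where yh: "\<And>h. h \<in> H \<Longrightarrow> yh h \<in> span S \<and> smul h s + yh h \<in> N"
    using bchoice[of H "\<lambda>h y. y \<in> span S \<and> smul h s + y \<in> N"] by blast
  define nh where "nh h = smul h s + yh h" for h
  define G where "G = G' \<union> nh ` H"
  have finG: "finite G" unfolding G_def using G' H by simp
  have "G' \<subseteq> N" using G'(2) N'_def by blast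
  moreover have "nh ` H \<subseteq> N" unfolding nh_def using yh by blast
  ultimately have GN: "G \<subseteq> N" unfolding G_def by blast
  have "N \<subseteq> span G"
  proof
    fix x assume "x \<in> N"
    then obtain r y where ry: "y \<in> span S" "x = smul r s + y"
      using span_insert_decomp[OF insert(1,2)] insert.prems(2) by blast
    have "r \<in> I" unfolding I_def using ry \<open>x \<in> N\<close> by blast
    then obtain c where c: "r = (\<Sum>h\<in>H. c h * h)" using H(3) unfolding lspan_def by blast
    define v where "v = (\<Sum>h\<in>H. smul (c h) (nh h))"
    have vG: "v \<in> span G" unfolding v_def
      using submod_span finG G_def span_mem by (intro submod_sum submod_smul) auto
    have vN: "v \<in> N" using vG span_subset[OF N GN] by blast
    have v_eq: "v = smul r s + (\<Sum>h\<in>H. smul (c h) (yh h))"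
      unfolding v_def nh_def c by (simp add: smul_add_r sum.distrib smul_sum_l smul_assoc)
    have "x - v = y - (\<Sum>h\<in>H. smul (c h) (yh h))" using ry v_eq by simp
    moreover have "(\<Sum>h\<in>H. smul (c h) (yh h)) \<in> span S"
      using yh by (intro submod_sum[OF submod_span] submod_smul[OF submod_span]) auto
    ultimately have "x - v \<in> span S" using ry(1) submod_diff[OF submod_span] by simp
    moreover have "x - v \<in> N" using \<open>x \<in> N\<close> vN submod_diff[OF N] by simp
    ultimately have "x - v \<in> span G'" using G'(3) N'_def by blast
    moreover have "span G' \<subseteq> span G" using span_subset[OF submod_span] span_mem[OF finG] G_def by blast
    ultimately have "x - v \<in> span G" by blast
    then have "(x - v) + v \<in> span G" using vG submod_add[OF submod_span] by blast
    then show "x \<in> span G" by simp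
  qed
  moreover have "span G \<subseteq> N" using span_subset[OF N GN] .
  ultimately show ?case using finG GN by blast
qed

end

interpretation Rmod: lmod "(*) :: 'r::ring_1 \<Rightarrow> 'r \<Rightarrow> 'r"
  by unfold_locales (simp_all add: algebra_simps mult.assoc)

lemma Rmod_span_lspan: "Rmod.span G = lspan G"
  unfolding Rmod.span_def lspan_def by simp


lemma nested_compact:
  fixes K :: "nat \<Rightarrow> 'a::t2_space set"
  assumes C: "\<And>n. compact (K n)" and D: "\<And>n. K (Suc n) \<subseteq> K n" and NE: "\<And>n. K n \<noteq> {}"
  shows "(\<Inter>n. K n) \<noteq> {}"
proof -
  have anti: "m \<le> n \<Longrightarrow> K n \<subseteq> K m" for m n
    using lift_Suc_antimono_le[of K, OF D] by blast
  have "K 0 \<inter> (\<Inter>i\<in>UNIV. K i) \<noteq> {}"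
  proof (rule compact_imp_fip_image[OF C])
    show "closed (K i)" for i using C compact_imp_closed by blast
    fix I' :: "nat set" assume "finite I'"
    define n where "n = Max (insert 0 I')"
    have "K n \<subseteq> K i" if "i \<in> insert 0 I'" for i
    proof -
      have "i \<le> n" unfolding n_def using Max_ge[of "insert 0 I'" i] that \<open>finite I'\<close> by blast
      then show ?thesis by (rule anti)
    qed
    then have "K n \<subseteq> K 0 \<inter> (\<Inter>i\<in>I'. K i)" by blast
    then show "K 0 \<inter> (\<Inter>i\<in>I'. K i) \<noteq> {}" using NE[of n] by blast
  qed
  then show ?thesis by blast
qed

lemma nested_image:
  fixes K :: "nat \<Rightarrow> 'a::t2_space set" and f :: "'a \<Rightarrow> 'b::t2_space"
  assumes C: "\<And>n. compact (K n)" and D: "\<And>n. K (Suc n) \<subseteq> K n" and f: "continuous_on UNIV f"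
  shows "(\<Inter>n. f ` K n) \<subseteq> f ` (\<Inter>n. K n)"
proof
  fix y assume y: "y \<in> (\<Inter>n. f ` K n)"
  have cl: "closed {x. f x = y}" using closed_Collect_eq[OF f continuous_on_const] .
  have "(\<Inter>n. K n \<inter> {x. f x = y}) \<noteq> {}"
  proof (rule nested_compact)
    show "compact (K n \<inter> {x. f x = y})" for n using C cl by blast
    show "K (Suc n) \<inter> {x. f x = y} \<subseteq> K n \<inter> {x. f x = y}" for n using D by blast
    show "K n \<inter> {x. f x = y} \<noteq> {}" for n using y by blast
  qed
  then show "y \<in> f ` (\<Inter>n. K n)" by blast
qed

definition SG :: "'r::ring_1 set \<Rightarrow> 'r set \<Rightarrow> 'r set" where
  "SG G K = {x. \<exists>z. (\<forall>g\<in>G. z g \<in> K) \<and> x = (\<Sum>g\<in>G. g * z g)}"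

lemma SG_empty: "SG {} K = {0}"
  unfolding SG_def by auto

lemma SG_insert:
  assumes "finite G" "g \<notin> G"
  shows "SG (insert g G) K = (\<lambda>p. g * fst p + snd p) ` (K \<times> SG G K)"
proof
  show "SG (insert g G) K \<subseteq> (\<lambda>p. g * fst p + snd p) ` (K \<times> SG G K)"
  proof
    fix x assume "x \<in> SG (insert g G) K"
    then obtain z where z: "\<forall>h\<in>insert g G. z h \<in> K" "x = (\<Sum>h\<in>insert g G. h * z h)"
      unfolding SG_def by blast
    then have "x = g * z g + (\<Sum>h\<in>G. h * z h)" using assms by simp
    moreover have "(\<Sum>h\<in>G. h * z h) \<in> SG G K" unfolding SG_def using z(1) by auto
    ultimately show "x \<in> (\<lambda>p. g * fst p + snd p) ` (K \<times> SG G K)"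
      using z(1) by (intro image_eqI[of _ _ "(z g, \<Sum>h\<in>G. h * z h)"]) auto
  qed
  show "(\<lambda>p. g * fst p + snd p) ` (K \<times> SG G K) \<subseteq> SG (insert g G) K"
  proof
    fix x assume "x \<in> (\<lambda>p. g * fst p + snd p) ` (K \<times> SG G K)"
    then obtain k b where kb: "k \<in> K" "b \<in> SG G K" "x = g * k + b" by auto
    obtain z where z: "\<forall>h\<in>G. z h \<in> K" "b = (\<Sum>h\<in>G. h * z h)" using kb(2) unfolding SG_def by blast
    define z' where "z' = z(g := k)"
    have "(\<Sum>h\<in>G. h * z' h) = (\<Sum>h\<in>G. h * z h)"
      using assms(2) unfolding z'_def by (intro sum.cong) auto
    then have "x = (\<Sum>h\<in>insert g G. h * z' h)" using assms kb z by (simp add: z'_def)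
    moreover have "\<forall>h\<in>insert g G. z' h \<in> K" using z kb unfolding z'_def by auto
    ultimately show "x \<in> SG (insert g G) K" unfolding SG_def by blast
  qed
qed

lemma SG_mono: "K \<subseteq> K' \<Longrightarrow> SG G K \<subseteq> SG G K'"
  unfolding SG_def by blast

lemma cont_lin: "continuous_on UNIV (\<lambda>p::'r::{ring_1, topological_ab_group_add, topological_semigroup_mult} \<times> 'r. g * fst p + snd p)"
  by (intro continuous_intros)

lemma SG_compact:
  fixes K :: "'r::{ring_1, topological_ab_group_add, topological_semigroup_mult, t2_space} set"
  assumes "finite G" "compact K"
  shows "compact (SG G K)"
  using assms(1)
proof (induction G rule: finite_induct)
  case empty then show ?case by (simp add: SG_empty)
next
  case (insert g G)
  then show ?case unfolding SG_insert[OF insert(1,2)]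
    by (intro compact_continuous_image cont_lin[THEN continuous_on_subset] compact_Times assms(2)) auto
qed

lemma SG_Inter:
  fixes K :: "nat \<Rightarrow> 'r::{ring_1, topological_ab_group_add, topological_semigroup_mult, t2_space} set"
  assumes "finite G" and C: "\<And>n. compact (K n)" and D: "\<And>n. K (Suc n) \<subseteq> K n"
  shows "(\<Inter>n. SG G (K n)) \<subseteq> SG G (\<Inter>n. K n)"
  using assms(1)
proof (induction G rule: finite_induct)
  case empty then show ?case by (simp add: SG_empty)
next
  case (insert g G)
  let ?f = "\<lambda>p::'r \<times> 'r. g * fst p + snd p"
  have "(\<Inter>n. SG (insert g G) (K n)) = (\<Inter>n. ?f ` (K n \<times> SG G (K n)))"
    using SG_insert[OF insert(1,2)] by simp
  also have "\<dots> \<subseteq> ?f ` (\<Inter>n. K n \<times> SG G (K n))"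
  proof (rule nested_image)
    show "compact (K n \<times> SG G (K n))" for n using C SG_compact insert(1) compact_Times by blast
    show "K (Suc n) \<times> SG G (K (Suc n)) \<subseteq> K n \<times> SG G (K n)" for n using D SG_mono by blast
    show "continuous_on UNIV ?f" by (rule cont_lin)
  qed
  also have "\<dots> \<subseteq> ?f ` ((\<Inter>n. K n) \<times> SG G (\<Inter>n. K n))"
  proof (rule image_mono)
    show "(\<Inter>n. K n \<times> SG G (K n)) \<subseteq> (\<Inter>n. K n) \<times> SG G (\<Inter>n. K n)"
    proof
      fix p assume "p \<in> (\<Inter>n. K n \<times> SG G (K n))"
      then have "fst p \<in> (\<Inter>n. K n)" "snd p \<in> (\<Inter>n. SG G (K n))" by auto
      then show "p \<in> (\<Inter>n. K n) \<times> SG G (\<Inter>n. K n)" using insert.IH by (cases p) auto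
    qed
  qed
  also have "\<dots> = SG (insert g G) (\<Inter>n. K n)" using SG_insert[OF insert(1,2)] by simp
  finally show ?case .
qed

lemma rspan_SG: "rspan G = SG G UNIV"
  unfolding rspan_def SG_def by auto

lemma tsideal_left: "tsideal I \<Longrightarrow> left_ideal I"
  unfolding tsideal_def left_ideal_def by blast

lemma tsideal_right: "tsideal I \<Longrightarrow> right_ideal I"
  unfolding tsideal_def right_ideal_def by blast

context Rctx
begin

lemma mp_compact: "compact (mp j :: 'r set)"
proof -
  have ex: "\<exists>G. finite G \<and> G \<subseteq> (mp j :: 'r set) \<and> mp j = rspan G"
    by (rule noeth_right_fg[OF noethR tsideal_right[OF tsideal_mp[OF localR, of j]]])
  then obtain H where H0: "finite H \<and> H \<subseteq> (mp j :: 'r set) \<and> mp j = rspan H" by (rule exE)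
  then have H: "finite H" "mp j = rspan H" by simp_all
  show ?thesis unfolding H(2) rspan_SG using SG_compact[OF H(1) compactR] .
qed

lemma mp_closed: "closed (mp j :: 'r set)"
  by (rule compact_imp_closed[OF mp_compact])

lemma m_closed: "closed (max_ideal :: 'r set)"
  using mp_closed[of 1] mp_1[OF localR] by simp

lemma exists_Gm: "\<exists>Gm. finite Gm \<and> Gm \<subseteq> max_ideal \<and> (max_ideal :: 'r set) = rspan Gm"
  by (rule noeth_right_fg[OF noethR tsideal_right[OF tsideal_m[OF localR]]])

lemma mp_Suc_SG:
  assumes Gm: "finite Gm" "(max_ideal :: 'r set) = rspan Gm"
  shows "mp (Suc j) \<subseteq> SG Gm (mp j)"
proof
  fix a :: 'r assume "a \<in> mp (Suc j)"
  then have "a \<in> iprod max_ideal (mp j)" by simp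
  then show "a \<in> SG Gm (mp j)"
  proof (induction a rule: iprod.induct)
    case ip0
    show ?case unfolding SG_def using tsideal_mp[OF localR, of j]
      by (intro CollectI exI[of _ "\<lambda>_. 0"]) (simp add: tsideal_def)
  next
    case (ipS x y s)
    obtain c where c: "x = (\<Sum>g\<in>Gm. g * c g)" using ipS(1) Gm(2) unfolding rspan_def by blast
    obtain z where z: "\<forall>g\<in>Gm. z g \<in> mp j" "s = (\<Sum>g\<in>Gm. g * z g)" using ipS(4) unfolding SG_def by blast
    have eq: "x * y + s = (\<Sum>g\<in>Gm. g * (c g * y + z g))"
      unfolding c z by (simp add: sum_distrib_right sum.distrib distrib_left mult.assoc)
    have tj: "tsideal (mp j :: 'r set)" by (rule tsideal_mp[OF localR])
    have "c g * y + z g \<in> mp j" if "g \<in> Gm" for g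
    proof -
      have "c g * y \<in> mp j" using tj ipS(2) unfolding tsideal_def by blast
      then show ?thesis using tj z(1) that unfolding tsideal_def by blast
    qed
    then have "\<forall>g\<in>Gm. c g * y + z g \<in> mp j" by blast
    then show ?case unfolding SG_def eq by (intro CollectI exI[of _ "\<lambda>g. c g * y + z g"]) simp
  qed
qed

lemma J_zero: "(\<Inter>j. mp j) = ({0} :: 'r set)"
proof -
  define J where "J = (\<Inter>j. mp j :: 'r set)"
  obtain Gm where Gm: "finite Gm" "Gm \<subseteq> max_ideal" "(max_ideal :: 'r set) = rspan Gm"
    using exists_Gm by blast
  have tJ: "tsideal J" unfolding J_def tsideal_def using tsideal_mp[OF localR] unfolding tsideal_def
    by blast
  obtain H where H: "finite H" "H \<subseteq> J" "J = lspan H"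
    using noeth_left_fg[OF noethR tsideal_left[OF tJ]] by blast
  have "J \<subseteq> SG Gm J"
  proof
    fix x assume "x \<in> J"
    then have "x \<in> (\<Inter>n. SG Gm (mp n))" using mp_Suc_SG[OF Gm(1,3)] unfolding J_def by blast
    then show "x \<in> SG Gm J" unfolding J_def
      using SG_Inter[of Gm "\<lambda>n. mp n", OF Gm(1) mp_compact mp_Suc_sub] by blast
  qed
  moreover have "SG Gm J \<subseteq> Rmod.msub J"
  proof
    fix x assume "x \<in> SG Gm J"
    then obtain z where z: "\<forall>g\<in>Gm. z g \<in> J" "x = (\<Sum>g\<in>Gm. g * z g)" unfolding SG_def by blast
    show "x \<in> Rmod.msub J" unfolding z(2)
      using z(1) Gm(2) by (intro Rmod.msub_sum Rmod.msub_single) auto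
  qed
  ultimately have "Rmod.span H \<subseteq> splus {0} (Rmod.msub (Rmod.span H))"
    unfolding splus_def Rmod_span_lspan H(3)[symmetric] by auto
  then have "Rmod.span H \<subseteq> {0}"
    using Rmod.nakayama[OF localR H(1)] by (simp add: Rmod.submod_def)
  then have "J \<subseteq> {0}" unfolding H(3) Rmod_span_lspan .
  moreover have "0 \<in> J" using tJ unfolding tsideal_def by blast
  ultimately show ?thesis unfolding J_def by blast
qed

lemma mp_small:
  assumes "open U" "(0::'r) \<in> U"
  shows "\<exists>j. mp j \<subseteq> U"
proof (rule ccontr)
  assume "\<not> ?thesis"
  then have ne: "mp j - U \<noteq> {}" for j by blast
  have "(\<Inter>j. mp j - U) \<noteq> {}"
  proof (rule nested_compact)
    show "compact (mp n - U)" for n using mp_compact assms(1) by (simp add: Diff_eq compact_Int_closed open_closed)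
    show "mp (Suc n) - U \<subseteq> mp n - U" for n using mp_Suc_sub by blast
  qed (rule ne)
  then obtain x where "x \<in> (\<Inter>j. mp j)" "x \<notin> U" by blast
  then show False using J_zero assms(2) by auto
qed

lemma series_conv:
  fixes t :: "nat \<Rightarrow> 'r"
  assumes T: "\<And>n. t n \<in> mp (n - i)"
  shows "\<exists>S. t sums S \<and> (\<forall>j. \<forall>N\<ge>j + i. (\<Sum>n<N. t n) - S \<in> mp j)"
proof -
  define P where "P N = (\<Sum>n<N. t n)" for N
  define K where "K j = (\<lambda>y. P (j + i) + y) ` mp j" for j
  have tsI: "tsideal (mp j :: 'r set)" for j using tsideal_mp[OF localR] .
  have tail: "P N - P (j + i) \<in> mp j" if "N \<ge> j + i" for N j
  proof -
    have "P N = P (j + i) + (\<Sum>n\<in>{j + i..<N}. t n)"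
      unfolding P_def using sum.atLeastLessThan_concat[of 0 "j + i" N t] that by (simp add: atLeast0LessThan)
    then have "P N - P (j + i) = (\<Sum>n\<in>{j + i..<N}. t n)" by simp
    moreover have "t n \<in> mp j" if "n \<in> {j + i..<N}" for n
    proof -
      have "j \<le> n - i" using that by auto
      then show ?thesis using T[of n] mp_anti[of j "n - i"] by blast
    qed
    ultimately show ?thesis using tsideal_sum[OF tsI[of j], of "{j + i..<N}" t] by simp
  qed
  have "(\<Inter>j. K j) \<noteq> {}"
  proof (rule nested_compact)
    show "compact (K j)" for j unfolding K_def
      by (intro compact_continuous_image mp_compact continuous_intros)
    show "K j \<noteq> {}" for j unfolding K_def using tsI[of j] unfolding tsideal_def by blast
    show "K (Suc j) \<subseteq> K j" for j
    proof
      fix x assume "x \<in> K (Suc j)"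
      then obtain z where z: "z \<in> mp (Suc j)" "x = P (Suc j + i) + z" unfolding K_def by blast
      have "P (Suc j + i) = P (j + i) + t (j + i)" unfolding P_def by simp
      moreover have "t (j + i) \<in> mp j" using T[of "j + i"] by simp
      moreover have "z \<in> mp j" using z(1) mp_Suc_sub by blast
      ultimately have "x = P (j + i) + (t (j + i) + z)" "t (j + i) + z \<in> mp j"
        using z(2) tsI[of j] unfolding tsideal_def by (simp_all add: add.assoc)
      then show "x \<in> K j" unfolding K_def by blast
    qed
  qed
  then obtain S where S: "\<And>j. S \<in> K j" by blast
  have close: "P N - S \<in> mp j" if "N \<ge> j + i" for N j
  proof -
    obtain z where z: "z \<in> mp j" "S = P (j + i) + z" using S[of j] unfolding K_def by blast
    have e: "P N - S = (P N - P (j + i)) - z" using z(2) by simp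
    show ?thesis unfolding e by (rule tsideal_diff[OF tsI tail[OF that] z(1)])
  qed
  have "P \<longlonglongrightarrow> S"
  proof (rule topological_tendstoI)
    fix U assume U: "open U" "S \<in> U"
    have "open ((\<lambda>y. y + S) -` U)" using U(1) by (intro open_vimage continuous_intros)
    moreover have "0 \<in> (\<lambda>y. y + S) -` U" using U(2) by simp
    ultimately obtain j where j: "mp j \<subseteq> (\<lambda>y. y + S) -` U" using mp_small by blast
    show "eventually (\<lambda>N. P N \<in> U) sequentially"
    proof (rule eventually_sequentiallyI)
      fix N assume "j + i \<le> N"
      then have "P N - S \<in> (\<lambda>y. y + S) -` U" using close j by blast
      then show "P N \<in> U" by simp
    qed
  qed
  then have "t sums S" unfolding sums_def P_def .
  then show ?thesis using close unfolding P_def by blast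
qed

lemma suminf_m:
  fixes t :: "nat \<Rightarrow> 'r"
  assumes T: "\<And>n. t n \<in> mp (n - i)" and M: "\<And>n. t n \<in> max_ideal"
  shows "suminf t \<in> max_ideal"
proof -
  obtain S where S: "t sums S" "\<forall>j. \<forall>N\<ge>j + i. (\<Sum>n<N. t n) - S \<in> mp j"
    using series_conv[OF T] by blast
  have a0: "(\<Sum>n<1 + i. t n) - S \<in> mp 1" using S(2) by blast
  have a: "(\<Sum>n<1 + i. t n) - S \<in> max_ideal" using a0 mp_1[OF localR] by blast
  have b: "(\<Sum>n<1 + i. t n) \<in> max_ideal" using M by (intro m_sum[OF localR])
  have "(\<Sum>n<1 + i. t n) - ((\<Sum>n<1 + i. t n) - S) \<in> max_ideal" by (rule m_diff[OF localR b a])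
  then have "S \<in> max_ideal" by simp
  then show ?thesis using sums_unique[OF S(1)] by simp
qed

end


lemma suminf_single:
  fixes f :: "nat \<Rightarrow> 'a::{topological_comm_monoid_add, t2_space}"
  assumes "\<And>n. n \<noteq> k \<Longrightarrow> f n = 0"
  shows "suminf f = f k"
  using suminf_finite[of "{k}" f] assms by simp

definition Ysps :: "nat \<Rightarrow> 'r::ring_1 sps" where
  "Ysps p = (\<lambda>n. if n = p then 1 else 0)"

definition trunc :: "nat \<Rightarrow> 'r::ring_1 sps \<Rightarrow> 'r sps" where
  "trunc K a = (\<lambda>n. if n < K then a n else 0)"

definition shiftd :: "nat \<Rightarrow> 'r::ring_1 sps \<Rightarrow> 'r sps" where
  "shiftd K a = (\<lambda>n. a (n + K))"

definition uu :: "nat \<Rightarrow> 'r::ring_1 sps" where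
  "uu p = (\<lambda>n. if p dvd n then 1 else 0)"

definition bb :: "nat \<Rightarrow> 'r::ring_1 sps" where
  "bb p = (\<lambda>n. (if n = 0 then 1 else 0) + (if n = p then - 1 else 0))"

lemma trunc_poly: "is_skew_poly (trunc K a)"
proof -
  have "{n. trunc K a n \<noteq> 0} \<subseteq> {..<K}" unfolding trunc_def by auto
  then show ?thesis unfolding is_skew_poly_def using finite_subset by blast
qed

lemma const_poly: "is_skew_poly (sps_const r)"
proof -
  have "{n. sps_const r n \<noteq> 0} \<subseteq> {0}" unfolding sps_const_def by auto
  then show ?thesis unfolding is_skew_poly_def using finite_subset by blast
qed

lemma const_add: "sps_const (r + s) = sps_add (sps_const r) (sps_const s)"
  unfolding sps_const_def sps_add_def by auto

lemma const_one: "sps_const 1 = sps_one"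
  unfolding sps_const_def sps_one_def by auto

lemma const_zero: "sps_const 0 = (\<lambda>_. 0)"
  unfolding sps_const_def by auto

lemma Ysps0: "Ysps 0 = sps_one"
  unfolding Ysps_def sps_one_def by auto

context Rctx
begin

lemma mult_const_left: "sps_mult \<sigma> \<delta> (sps_const r) b = (\<lambda>k. r * b k)"
proof
  fix k
  have inner: "(\<Sum>n. sps_const r n * skew_coeff \<sigma> \<delta> n (k - m) (b m)) = (if m = k then r * b k else 0)"
    if "m \<le> k" for m
  proof -
    have "(\<Sum>n. sps_const r n * skew_coeff \<sigma> \<delta> n (k - m) (b m)) = sps_const r 0 * skew_coeff \<sigma> \<delta> 0 (k - m) (b m)"
      by (rule suminf_single) (simp add: sps_const_def)
    then show ?thesis using that by (simp add: sps_const_def)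
  qed
  have "sps_mult \<sigma> \<delta> (sps_const r) b k = (\<Sum>m\<le>k. (if m = k then r * b k else 0))"
    unfolding sps_mult_def using inner by simp
  also have "\<dots> = r * b k" by simp
  finally show "sps_mult \<sigma> \<delta> (sps_const r) b k = r * b k" .
qed

lemma mult_Y_right: "sps_mult \<sigma> \<delta> a (Ysps p) = (\<lambda>k. if p \<le> k then a (k - p) else 0)"
proof
  fix k
  have inner: "(\<Sum>n. a n * skew_coeff \<sigma> \<delta> n (k - m) (Ysps p m)) = (if m = p then a (k - p) else 0)"
    if "m \<le> k" for m
  proof (cases "m = p")
    case True
    have "(\<Sum>n. a n * skew_coeff \<sigma> \<delta> n (k - m) (Ysps p m)) = a (k - m) * skew_coeff \<sigma> \<delta> (k - m) (k - m) (Ysps p m)"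
      using True by (intro suminf_single) (simp add: Ysps_def sc_fixed sigma_one delta_one)
    then show ?thesis using True by (simp add: Ysps_def sc_fixed sigma_one delta_one)
  next
    case False
    then show ?thesis by (simp add: Ysps_def sc_zero)
  qed
  have "sps_mult \<sigma> \<delta> a (Ysps p) k = (\<Sum>m\<le>k. (if m = p then a (k - p) else 0))"
    unfolding sps_mult_def using inner by simp
  also have "\<dots> = (if p \<le> k then a (k - p) else 0)" by (simp add: sum.delta)
  finally show "sps_mult \<sigma> \<delta> a (Ysps p) k = (if p \<le> k then a (k - p) else 0)" .
qed

lemma mult_const_right: "sps_mult \<sigma> \<delta> a (sps_const r) = (\<lambda>k. \<Sum>n. a n * skew_coeff \<sigma> \<delta> n k r)"
proof
  fix k
  have inner: "(\<Sum>n. a n * skew_coeff \<sigma> \<delta> n (k - m) (sps_const r m))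
      = (if m = 0 then (\<Sum>n. a n * skew_coeff \<sigma> \<delta> n k r) else 0)" for m
    by (simp add: sps_const_def sc_zero)
  have "sps_mult \<sigma> \<delta> a (sps_const r) k = (\<Sum>m\<le>k. (if m = 0 then (\<Sum>n. a n * skew_coeff \<sigma> \<delta> n k r) else 0))"
    unfolding sps_mult_def using inner by simp
  also have "\<dots> = (\<Sum>n. a n * skew_coeff \<sigma> \<delta> n k r)" by (simp add: sum.delta)
  finally show "sps_mult \<sigma> \<delta> a (sps_const r) k = (\<Sum>n. a n * skew_coeff \<sigma> \<delta> n k r)" .
qed

lemma Ysps_Suc: "Ysps (Suc p) = sps_mult \<sigma> \<delta> (Ysps p) (Ysps 1)"
proof (rule ext)
  fix k
  show "Ysps (Suc p) k = sps_mult \<sigma> \<delta> (Ysps p) (Ysps 1) k"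
    unfolding mult_Y_right by (cases k) (simp_all add: Ysps_def)
qed

lemma decomp: "a = sps_add (trunc K a) (sps_mult \<sigma> \<delta> (shiftd K a) (Ysps K))"
  unfolding mult_Y_right by (auto simp: sps_add_def trunc_def shiftd_def)

lemma bb_fixed: "0 < p \<Longrightarrow> \<sigma> (bb p m) = bb p m \<and> \<delta> (bb p m) = (0::'r)"
  by (auto simp: bb_def sigma_one sigma_zero sigma_m1 delta_one delta_zero delta_m1)

lemma unit_uu: assumes p: "0 < p" shows "sps_mult \<sigma> \<delta> (uu p) (bb p) = (sps_one :: 'r sps)"
proof
  fix k
  have inner: "(\<Sum>n. uu p n * skew_coeff \<sigma> \<delta> n (k - m) (bb p m)) = uu p (k - m) * (bb p m :: 'r)" for m
  proof -
    have "(\<Sum>n. uu p n * skew_coeff \<sigma> \<delta> n (k - m) (bb p m)) = uu p (k - m) * skew_coeff \<sigma> \<delta> (k - m) (k - m) (bb p m)"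
      by (rule suminf_single) (simp add: sc_fixed[OF conjunct1[OF bb_fixed[OF p]] conjunct2[OF bb_fixed[OF p]]])
    then show ?thesis by (simp add: sc_fixed[OF conjunct1[OF bb_fixed[OF p]] conjunct2[OF bb_fixed[OF p]]])
  qed
  have "sps_mult \<sigma> \<delta> (uu p) (bb p) k = (\<Sum>m\<le>k. uu p (k - m) * (bb p m :: 'r))"
    unfolding sps_mult_def using inner by simp
  also have "\<dots> = (\<Sum>m\<le>k. (if m = 0 then uu p (k - m) else 0) + (if m = p then - uu p (k - m) else 0))"
    unfolding bb_def by (intro sum.cong) (auto simp: distrib_left)
  also have "\<dots> = uu p k + (if p \<le> k then - uu p (k - p) else 0)"
    by (simp add: sum.distrib sum.delta)
  also have "\<dots> = sps_one k"
  proof (cases "k = 0")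
    case True then show ?thesis using p by (simp add: uu_def sps_one_def)
  next
    case False
    show ?thesis
    proof (cases "p \<le> k")
      case True
      have "p dvd k \<longleftrightarrow> p dvd (k - p)" using True dvd_minus_self by auto
      then show ?thesis using True False by (simp add: uu_def sps_one_def)
    next
      case F2: False
      then have "\<not> p dvd k" using False by (auto dest: dvd_imp_le)
      then show ?thesis using F2 False by (simp add: uu_def sps_one_def)
    qed
  qed
  finally show "sps_mult \<sigma> \<delta> (uu p) (bb p) k = sps_one k" .
qed

lemma bb_eq: "bb p = sps_add sps_one (sps_mult \<sigma> \<delta> (sps_const (- 1)) (Ysps p))"
  unfolding mult_const_left by (auto simp: bb_def sps_add_def sps_one_def Ysps_def)

lemma units_closed: "closed {x::'r. is_unit x}"
proof -
  define Z where "Z = {p :: 'r \<times> 'r. fst p * snd p = 1} \<inter> {p. snd p * fst p = 1}"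
  have cZ: "closed Z" unfolding Z_def
    by (intro closed_Int closed_Collect_eq continuous_intros)
  have "compact (UNIV :: ('r \<times> 'r) set)" using compact_Times[OF compactR compactR] by simp
  then have "compact Z" using cZ by (simp add: compact_Int_closed[of UNIV Z, simplified])
  then have "compact (fst ` Z)" by (intro compact_continuous_image continuous_intros)
  moreover have "fst ` Z = {x. is_unit x}"
  proof
    show "fst ` Z \<subseteq> {x. is_unit x}" unfolding Z_def is_unit_def by auto
    show "{x. is_unit x} \<subseteq> fst ` Z"
    proof
      fix x assume "x \<in> {x::'r. is_unit x}"
      then obtain y where "x * y = 1" "y * x = 1" unfolding is_unit_def by blast
      then have "(x, y) \<in> Z" unfolding Z_def by simp
      then show "x \<in> fst ` Z" by (rule image_eqI[rotated]) simp
    qed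
  qed
  ultimately show ?thesis using compact_imp_closed[of "fst ` Z"] by simp
qed

lemma m_open: "open (max_ideal :: 'r set)"
proof -
  have eq: "max_ideal = - {x::'r. is_unit x}" unfolding max_ideal_def by auto
  have "open (- {x::'r. is_unit x})" by (rule open_Compl[OF units_closed])
  then show ?thesis unfolding eq .
qed

lemma finite_reps: "\<exists>E. finite E \<and> (\<forall>r::'r. \<exists>e\<in>E. r - e \<in> max_ideal)"
proof -
  define f where "f e = (\<lambda>y. y - e) -` (max_ideal :: 'r set)" for e
  have "open (f e)" for e unfolding f_def by (intro open_vimage m_open continuous_intros)
  moreover have "UNIV \<subseteq> (\<Union>e\<in>UNIV. f e)" unfolding f_def using m_zero[OF localR] by auto
  ultimately obtain C where C: "C \<subseteq> UNIV" "finite C" "UNIV \<subseteq> (\<Union>e\<in>C. f e)"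
    by (rule compactE_image[OF compactR, of UNIV f])
  have "\<forall>r::'r. \<exists>e\<in>C. r - e \<in> max_ideal"
  proof
    fix r :: 'r
    obtain e where "e \<in> C" "r \<in> f e" using C(3) by blast
    then show "\<exists>e\<in>C. r - e \<in> max_ideal" unfolding f_def by auto
  qed
  then show ?thesis using C(2) by blast
qed

end

locale Mctx = Rctx \<sigma> \<delta> for \<sigma> \<delta> :: "'r::{ring_1, topological_ab_group_add, topological_semigroup_mult, t2_space} \<Rightarrow> 'r" +
  fixes act :: "'r sps \<Rightarrow> 'm::ab_group_add \<Rightarrow> 'm"
  assumes M_A_mod: "sps_module \<sigma> \<delta> (\<lambda>_. True) act"
    and M_fg_R: "fin_gen is_const_sps act"
begin

lemma act_add: "act (sps_add a b) x = act a x + act b x"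
  using M_A_mod unfolding sps_module_def by blast
lemma act_addr: "act a (x + y) = act a x + act a y"
  using M_A_mod unfolding sps_module_def by blast
lemma act_one: "act sps_one x = x"
  using M_A_mod unfolding sps_module_def by blast
lemma act_mult: "act (sps_mult \<sigma> \<delta> a b) x = act a (act b x)"
  using M_A_mod unfolding sps_module_def by blast

lemma act_zero: "act (\<lambda>_. 0) x = 0"
proof -
  have "sps_add (\<lambda>_. 0) (\<lambda>_. 0) = (\<lambda>_. (0::'r))" unfolding sps_add_def by simp
  then have "act (\<lambda>_. 0) x = act (\<lambda>_. 0) x + act (\<lambda>_. 0) x" using act_add[of "\<lambda>_. 0" "\<lambda>_. 0" x] by simp
  then show ?thesis by simp
qed

lemma act_zero_r: "act a 0 = 0"
  using act_addr[of a 0 0] by simp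

lemma act_neg_r: "act a (- x) = - act a x"
proof -
  have "act a x + act a (- x) = 0" using act_addr[of a x "- x"] act_zero_r by simp
  then show ?thesis using neg_eq_iff_add_eq_0[of "act a x" "act a (- x)"] by simp
qed

lemma act_diff_r: "act a (x - y) = act a x - act a y"
  using act_addr[of a x "- y"] act_neg_r by simp

lemma act_sum_r: "act a (sum f A) = (\<Sum>i\<in>A. act a (f i))"
  by (induction A rule: infinite_finite_induct) (simp_all add: act_zero_r act_addr)

lemma act_sumser: "finite G \<Longrightarrow> act (\<lambda>k. \<Sum>g\<in>G. f g k) x = (\<Sum>g\<in>G. act (f g) x)"
proof (induction G rule: finite_induct)
  case empty then show ?case by (simp add: act_zero)
next
  case (insert g G)
  have "(\<lambda>k. \<Sum>h\<in>insert g G. f h k) = sps_add (f g) (\<lambda>k. \<Sum>h\<in>G. f h k)"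
    using insert by (simp add: sps_add_def)
  then show ?case using insert by (simp add: act_add)
qed

lemma act_const_m1: "act (sps_const (- 1)) y = - y"
proof -
  have "act (sps_const 1) y + act (sps_const (- 1)) y = act (sps_const (1 + - 1)) y"
    by (simp only: const_add act_add)
  also have "\<dots> = 0" by (simp add: const_zero act_zero)
  finally have "y + act (sps_const (- 1)) y = 0" by (simp add: const_one act_one)
  then show ?thesis using neg_eq_iff_add_eq_0[of y "act (sps_const (- 1)) y"] by simp
qed

definition TT :: "'m \<Rightarrow> 'm" where "TT = act (Ysps 1)"

lemma act_Ysps: "act (Ysps p) x = (TT ^^ p) x"
proof (induction p arbitrary: x)
  case 0 then show ?case by (simp add: Ysps0 act_one)
next
  case (Suc p)
  have "act (Ysps (Suc p)) x = act (Ysps p) (TT x)" unfolding TT_def Ysps_Suc[of p] by (rule act_mult)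
  also have "\<dots> = (TT ^^ p) (TT x)" by (rule Suc.IH)
  finally show ?case by (simp add: funpow_swap1)
qed

lemma act_bb: "act (bb p) x = x - (TT ^^ p) x"
  unfolding bb_eq by (simp add: act_add act_one act_mult act_const_m1 act_Ysps)

lemma act_uu_bb: "0 < p \<Longrightarrow> act (uu p) (act (bb p) x) = x"
  using act_mult[of "uu p" "bb p" x] unit_uu act_one by simp

end

sublocale Mctx \<subseteq> Mmod: lmod "\<lambda>r. act (sps_const r)"
proof unfold_locales
  fix r s :: 'r and x y :: 'm
  show "act (sps_const (r + s)) x = act (sps_const r) x + act (sps_const s) x"
    by (simp add: const_add act_add)
  show "act (sps_const r) (x + y) = act (sps_const r) x + act (sps_const r) y"
    by (simp add: act_addr)
  have "sps_const (r * s) = sps_mult \<sigma> \<delta> (sps_const r) (sps_const s)"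
    unfolding mult_const_left by (auto simp: sps_const_def)
  then show "act (sps_const (r * s)) x = act (sps_const r) (act (sps_const s) x)"
    by (simp add: act_mult)
  show "act (sps_const 1) x = x" by (simp add: const_one act_one)
qed

context Mctx
begin

lemma act_msub:
  assumes stab: "\<And>b w. w \<in> W \<Longrightarrow> act b w \<in> W"
  shows "y \<in> Mmod.msub W \<Longrightarrow> act a y \<in> Mmod.msub W"
proof (induction y rule: Mmod.msub.induct)
  case ms0 then show ?case by (simp add: act_zero_r Mmod.msub.ms0)
next
  case (msS r w s)
  obtain Gm where Gm: "finite Gm" "Gm \<subseteq> max_ideal" "(max_ideal :: 'r set) = rspan Gm"
    using exists_Gm by blast
  define e where "e = sps_mult \<sigma> \<delta> a (sps_const r)"
  have ek: "e k \<in> max_ideal" for k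
  proof -
    have "e k = (\<Sum>n. a n * skew_coeff \<sigma> \<delta> n k r)" unfolding e_def mult_const_right by simp
    moreover have "(\<Sum>n. a n * skew_coeff \<sigma> \<delta> n k r) \<in> max_ideal"
    proof (rule suminf_m)
      show "a n * skew_coeff \<sigma> \<delta> n k r \<in> mp (n - k)" for n
        using sc_mp[of n k r] tsideal_mp[OF localR, of "n - k"] unfolding tsideal_def by blast
      show "a n * skew_coeff \<sigma> \<delta> n k r \<in> max_ideal" for n
        using sc_m[OF msS(1)] m_mult_left[OF localR] by blast
    qed
    ultimately show ?thesis by simp
  qed
  have "\<forall>k. \<exists>c. e k = (\<Sum>g\<in>Gm. g * c g)" using ek Gm(3) unfolding rspan_def by blast
  then obtain cc where cc: "\<And>k. e k = (\<Sum>g\<in>Gm. g * cc k g)" by metis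
  define sg where "sg g = (\<lambda>k. cc k g)" for g
  have e_eq: "e = (\<lambda>k. \<Sum>g\<in>Gm. sps_mult \<sigma> \<delta> (sps_const g) (sg g) k)"
    unfolding mult_const_left sg_def using cc by auto
  have "act a (act (sps_const r) w) = act e w" unfolding e_def by (simp add: act_mult)
  also have "\<dots> = (\<Sum>g\<in>Gm. act (sps_mult \<sigma> \<delta> (sps_const g) (sg g)) w)"
    unfolding e_eq by (rule act_sumser[OF Gm(1)])
  also have "\<dots> = (\<Sum>g\<in>Gm. act (sps_const g) (act (sg g) w))" by (simp add: act_mult)
  finally have "act a (act (sps_const r) w) \<in> Mmod.msub W"
    using Gm(2) stab[OF msS(2)] by (auto intro!: Mmod.msub_sum Mmod.msub_single)
  then show ?case using msS.IH by (simp add: act_addr Mmod.msub_add)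
qed

end


lemma pigeon_nat:
  assumes "finite B" "\<And>n::nat. f n \<in> B"
  shows "\<exists>i j. i < j \<and> f i = f j"
proof (rule ccontr)
  assume H: "\<not> ?thesis"
  have "inj f"
  proof (rule injI)
    fix x y assume "f x = f y"
    then show "x = y" using H by (metis linorder_neqE_nat)
  qed
  moreover have "finite (range f)" using assms finite_subset[of "range f" B] by blast
  ultimately have "finite (UNIV :: nat set)" using finite_imageD by blast
  then show False by simp
qed

context Mctx
begin

lemma TT_add: "TT (a + b) = TT a + TT b" unfolding TT_def by (rule act_addr)
lemma TT_diff: "TT (a - b) = TT a - TT b" unfolding TT_def by (rule act_diff_r)
lemma TTpow_add: "(TT ^^ n) (a + b) = (TT ^^ n) a + (TT ^^ n) b"
  by (induction n) (simp_all add: TT_add)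
lemma TTpow_diff: "(TT ^^ n) (a - b) = (TT ^^ n) a - (TT ^^ n) b"
  by (induction n) (simp_all add: TT_diff)

lemma nilp:
  assumes sub: "Mmod.submod W" and stab: "\<And>b w. w \<in> W \<Longrightarrow> act b w \<in> W"
    and G: "finite G" "W = Mmod.span G"
  shows "\<exists>K. \<forall>w\<in>W. (TT ^^ K) w \<in> Mmod.msub W"
proof -
  define ms where "ms = Mmod.msub W"
  have msW: "ms \<subseteq> W" unfolding ms_def by (rule Mmod.msub_sub[OF sub])
  have sms: "Mmod.submod ms" unfolding ms_def by (rule Mmod.submod_msub[OF localR])
  have ms0: "0 \<in> ms" using Mmod.submod_zero[OF sms] .
  have msadd: "a \<in> ms \<Longrightarrow> b \<in> ms \<Longrightarrow> a + b \<in> ms" for a b using Mmod.submod_add[OF sms] .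
  have msdiff: "a \<in> ms \<Longrightarrow> b \<in> ms \<Longrightarrow> a - b \<in> ms" for a b using Mmod.submod_diff[OF sms] .
  have msneg: "a \<in> ms \<Longrightarrow> - a \<in> ms" for a using Mmod.submod_neg[OF sms] .
  have actms: "y \<in> ms \<Longrightarrow> act b y \<in> ms" for b y unfolding ms_def by (rule act_msub[OF stab])
  have TTms: "y \<in> ms \<Longrightarrow> TT y \<in> ms" for y unfolding TT_def by (rule actms)
  have TTW: "w \<in> W \<Longrightarrow> TT w \<in> W" for w unfolding TT_def by (rule stab)
  have TTpowW: "w \<in> W \<Longrightarrow> (TT ^^ n) w \<in> W" for w n
    by (induction n) (simp_all add: TTW)
  have Wadd: "a \<in> W \<Longrightarrow> b \<in> W \<Longrightarrow> a + b \<in> W" for a b using Mmod.submod_add[OF sub] .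
  obtain E0 where E0: "finite E0" "\<forall>r::'r. \<exists>e\<in>E0. r - e \<in> max_ideal" using finite_reps by blast
  define EW where "EW = (\<lambda>\<epsilon>. \<Sum>g\<in>G. act (sps_const (\<epsilon> g)) g) ` (PiE G (\<lambda>_. E0))"
  have finEW: "finite EW" unfolding EW_def using G(1) E0(1) by (intro finite_imageI finite_PiE) auto
  have EWW: "EW \<subseteq> W" unfolding EW_def G(2) Mmod.span_def by blast
  have gW: "g \<in> G \<Longrightarrow> g \<in> W" for g using Mmod.span_mem[OF G(1)] G(2) by blast
  have approx: "\<exists>e\<in>EW. v - e \<in> ms" if vW: "v \<in> W" for v
  proof -
    obtain c where c: "v = (\<Sum>g\<in>G. act (sps_const (c g)) g)" using vW G(2) unfolding Mmod.span_def by blast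
    define eps where "eps g = (SOME e. e \<in> E0 \<and> c g - e \<in> max_ideal)" for g
    have eps: "eps g \<in> E0 \<and> c g - eps g \<in> max_ideal" for g
    proof -
      have "\<exists>e. e \<in> E0 \<and> c g - e \<in> max_ideal" using E0(2) by blast
      then show ?thesis unfolding eps_def by (rule someI_ex)
    qed
    define e where "e = (\<Sum>g\<in>G. act (sps_const (eps g)) g)"
    have "restrict eps G \<in> PiE G (\<lambda>_. E0)" using eps by auto
    moreover have "e = (\<lambda>\<epsilon>. \<Sum>g\<in>G. act (sps_const (\<epsilon> g)) g) (restrict eps G)"
      unfolding e_def by (intro sum.cong) auto
    ultimately have eEW: "e \<in> EW" unfolding EW_def by blast
    have "v - e = (\<Sum>g\<in>G. act (sps_const (c g - eps g)) g)"
      unfolding c e_def by (simp add: sum_subtractf Mmod.smul_diff_l)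
    also have "\<dots> \<in> ms" unfolding ms_def
      using eps gW by (intro Mmod.msub_sum Mmod.msub_single) auto
    finally show ?thesis using eEW by blast
  qed
  define V where "V k = {x. \<exists>w\<in>W. \<exists>y\<in>ms. x = (TT ^^ k) w + y}" for k
  have VW: "V k \<subseteq> W" for k unfolding V_def using TTpowW msW Wadd by blast
  have Vdec: "V (Suc k) \<subseteq> V k" for k
  proof
    fix x assume "x \<in> V (Suc k)"
    then obtain w y where wy: "w \<in> W" "y \<in> ms" "x = (TT ^^ Suc k) w + y" unfolding V_def by blast
    have "x = (TT ^^ k) (TT w) + y" using wy(3) by (simp add: funpow_swap1)
    then show "x \<in> V k" unfolding V_def using TTW[OF wy(1)] wy(2) by blast
  qed
  have Vplus: "x \<in> V k \<Longrightarrow> y \<in> ms \<Longrightarrow> x + y \<in> V k" for x y k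
  proof -
    assume "x \<in> V k" "y \<in> ms"
    then obtain w y' where "w \<in> W" "y' \<in> ms" "x = (TT ^^ k) w + y'" unfolding V_def by blast
    then have "x + y = (TT ^^ k) w + (y' + y)" "y' + y \<in> ms" using msadd \<open>y \<in> ms\<close> by (simp_all add: add.assoc)
    then show "x + y \<in> V k" unfolding V_def using \<open>w \<in> W\<close> by blast
  qed
  have Vminus: "x \<in> V k \<Longrightarrow> y \<in> ms \<Longrightarrow> x - y \<in> V k" for x y k
    using Vplus[of x k "- y"] msneg by simp
  have "\<exists>K. V (Suc K) \<inter> EW = V K \<inter> EW"
  proof (rule ccontr)
    assume H: "\<not> ?thesis"
    have lt: "card (V (Suc K) \<inter> EW) < card (V K \<inter> EW)" for K
    proof -
      have "V (Suc K) \<inter> EW \<subset> V K \<inter> EW" using H Vdec[of K] by blast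
      then show ?thesis using finEW by (intro psubset_card_mono) auto
    qed
    have "card (V K \<inter> EW) + K \<le> card (V 0 \<inter> EW)" for K
    proof (induction K)
      case 0 then show ?case by simp
    next
      case (Suc K) then show ?case using lt[of K] by simp
    qed
    from this[of "Suc (card (V 0 \<inter> EW))"] show False by simp
  qed
  then obtain K where K: "V (Suc K) \<inter> EW = V K \<inter> EW" by blast
  have VK: "V K \<subseteq> V (Suc K)"
  proof
    fix v assume v: "v \<in> V K"
    obtain e where e: "e \<in> EW" "v - e \<in> ms" using approx VW v by blast
    have "e = v - (v - e)" by simp
    then have "e \<in> V K" using Vminus[OF v e(2)] by simp
    then have "e \<in> V (Suc K)" using K e(1) by blast
    then have "e + (v - e) \<in> V (Suc K)" using Vplus e(2) by blast
    then show "v \<in> V (Suc K)" by simp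
  qed
  define Vs where "Vs = V K"
  have VsW: "Vs \<subseteq> W" unfolding Vs_def by (rule VW)
  have TVs: "TT v \<in> Vs" if vVs: "v \<in> Vs" for v
  proof -
    obtain w y where wy: "w \<in> W" "y \<in> ms" "v = (TT ^^ K) w + y" using vVs unfolding Vs_def V_def by blast
    have "TT v = (TT ^^ Suc K) w + TT y" using wy(3) by (simp add: TT_add)
    then have "TT v \<in> V (Suc K)" unfolding V_def using wy(1) TTms[OF wy(2)] by blast
    then show ?thesis using Vdec unfolding Vs_def by blast
  qed
  have surjT: "\<exists>v'\<in>Vs. v - TT v' \<in> ms" if vVs: "v \<in> Vs" for v
  proof -
    have "v \<in> V (Suc K)" using vVs VK unfolding Vs_def by blast
    then obtain w y where wy: "w \<in> W" "y \<in> ms" "v = (TT ^^ Suc K) w + y" unfolding V_def by blast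
    have "(TT ^^ K) w \<in> Vs" unfolding Vs_def V_def using wy(1) ms0 by force
    moreover have "v - TT ((TT ^^ K) w) = y" using wy(3) by simp
    ultimately show ?thesis using wy(2) by metis
  qed
  define cl where "cl v = {x. \<exists>y\<in>ms. x = v + y}" for v
  have cl_eq: "cl a = cl b \<longleftrightarrow> a - b \<in> ms" for a b
  proof
    assume "cl a = cl b"
    moreover have "a \<in> cl a" unfolding cl_def using ms0 by force
    ultimately obtain y where "y \<in> ms" "a = b + y" unfolding cl_def by blast
    then show "a - b \<in> ms" by simp
  next
    assume ab: "a - b \<in> ms"
    have ba: "b - a \<in> ms" using msneg[OF ab] by simp
    show "cl a = cl b"
    proof
      show "cl a \<subseteq> cl b"
      proof
        fix x assume "x \<in> cl a"
        then obtain y where "y \<in> ms" "x = a + y" unfolding cl_def by blast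
        then have "x = b + ((a - b) + y)" "(a - b) + y \<in> ms" using msadd[OF ab] by (simp add: algebra_simps, blast)
        then show "x \<in> cl b" unfolding cl_def by blast
      qed
      show "cl b \<subseteq> cl a"
      proof
        fix x assume "x \<in> cl b"
        then obtain y where "y \<in> ms" "x = b + y" unfolding cl_def by blast
        then have "x = a + ((b - a) + y)" "(b - a) + y \<in> ms" using msadd[OF ba] by (simp add: algebra_simps, blast)
        then show "x \<in> cl a" unfolding cl_def by blast
      qed
    qed
  qed
  define Q where "Q = cl ` Vs"
  have finQ: "finite Q"
  proof -
    have "Q \<subseteq> cl ` EW"
    proof
      fix q assume "q \<in> Q"
      then obtain v where v: "v \<in> Vs" "q = cl v" unfolding Q_def by blast
      obtain e where "e \<in> EW" "v - e \<in> ms" using approx VsW v(1) by blast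
      then show "q \<in> cl ` EW" using v(2) cl_eq by blast
    qed
    then show ?thesis using finEW finite_subset by blast
  qed
  define F where "F q = cl (TT (SOME v. v \<in> Vs \<and> cl v = q))" for q
  have Fcl: "F (cl v) = cl (TT v)" if vVs: "v \<in> Vs" for v
  proof -
    define v' where "v' = (SOME u. u \<in> Vs \<and> cl u = cl v)"
    have "v' \<in> Vs \<and> cl v' = cl v" unfolding v'_def
      by (rule someI[of "\<lambda>u. u \<in> Vs \<and> cl u = cl v" v]) (simp add: vVs)
    then have "v' - v \<in> ms" using cl_eq by blast
    then have "TT v' - TT v \<in> ms" using TTms TT_diff by metis
    then have "cl (TT v') = cl (TT v)" using cl_eq by blast
    then show ?thesis unfolding F_def v'_def by simp
  qed
  have FQ: "F ` Q = Q"
  proof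
    show "F ` Q \<subseteq> Q" unfolding Q_def using Fcl TVs by auto
    show "Q \<subseteq> F ` Q"
    proof
      fix q assume "q \<in> Q"
      then obtain v where v: "v \<in> Vs" "q = cl v" unfolding Q_def by blast
      obtain v' where v': "v' \<in> Vs" "v - TT v' \<in> ms" using surjT[OF v(1)] by blast
      have "q = cl (TT v')" using v(2) v'(2) cl_eq by blast
      also have "\<dots> = F (cl v')" using Fcl[OF v'(1)] by simp
      finally show "q \<in> F ` Q" unfolding Q_def using v'(1) by blast
    qed
  qed
  have injF: "inj_on F Q" by (rule eq_card_imp_inj_on[OF finQ]) (simp add: FQ)
  have FpowQ: "(F ^^ n) ` Q \<subseteq> Q" for n
    by (induction n) (use FQ in auto)
  have Fpow_inj: "inj_on (F ^^ n) Q" for n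
  proof (induction n)
    case 0 then show ?case by simp
  next
    case (Suc n)
    have "inj_on (F \<circ> (F ^^ n)) Q"
      using Suc.IH inj_on_subset[OF injF FpowQ[of n]] by (rule comp_inj_on)
    then show ?case by (simp add: comp_def)
  qed
  obtain i j where ij: "i < j" "restrict (F ^^ i) Q = restrict (F ^^ j) Q"
  proof -
    have "\<exists>i j. i < j \<and> restrict (F ^^ i) Q = restrict (F ^^ j) Q"
    proof (rule pigeon_nat)
      show "finite (PiE Q (\<lambda>_. Q))" using finQ by (intro finite_PiE) auto
      show "restrict (F ^^ n) Q \<in> PiE Q (\<lambda>_. Q)" for n using FpowQ[of n] by auto
    qed
    then show ?thesis using that by blast
  qed
  define p where "p = j - i"
  have p0: "0 < p" unfolding p_def using ij(1) by simp
  have Fp: "(F ^^ p) q = q" if qQ: "q \<in> Q" for q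
  proof -
    have "(F ^^ i) q = (F ^^ j) q" using ij(2) qQ by (metis restrict_apply')
    also have "F ^^ j = F ^^ i \<circ> F ^^ p" unfolding p_def using ij(1) by (simp add: funpow_add[symmetric])
    finally have "(F ^^ i) ((F ^^ p) q) = (F ^^ i) q" by simp
    moreover have "(F ^^ p) q \<in> Q" using FpowQ[of p] qQ by blast
    ultimately show ?thesis using Fpow_inj[of i] qQ by (meson inj_onD)
  qed
  have TTpowVs: "(TT ^^ n) v \<in> Vs" if vVs: "v \<in> Vs" for v n
    by (induction n) (simp_all add: vVs TVs)
  have Fpow_cl: "(F ^^ n) (cl v) = cl ((TT ^^ n) v)" if vVs: "v \<in> Vs" for v n
  proof (induction n)
    case 0 then show ?case by simp
  next
    case (Suc n) then show ?case using Fcl[OF TTpowVs[OF vVs, of n]] by simp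
  qed
  have Vsms: "Vs \<subseteq> ms"
  proof
    fix v assume v: "v \<in> Vs"
    have "cl ((TT ^^ p) v) = cl v" using Fpow_cl[OF v, of p] Fp[of "cl v"] v unfolding Q_def by simp
    then have "(TT ^^ p) v - v \<in> ms" using cl_eq by blast
    then have "v - (TT ^^ p) v \<in> ms" using msneg by force
    then have "act (bb p) v \<in> ms" by (simp add: act_bb)
    then have "act (uu p) (act (bb p) v) \<in> ms" by (rule actms)
    then show "v \<in> ms" using act_uu_bb[OF p0] by simp
  qed
  have "\<forall>w\<in>W. (TT ^^ K) w \<in> ms"
  proof
    fix w assume "w \<in> W"
    then have "(TT ^^ K) w + 0 \<in> Vs" unfolding Vs_def V_def using ms0 by blast
    then have "(TT ^^ K) w \<in> Vs" by simp
    then show "(TT ^^ K) w \<in> ms" using Vsms by blast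
  qed
  then show ?thesis unfolding ms_def by blast
qed

end


context Mctx
begin

lemma M_span: "\<exists>S. finite S \<and> (\<forall>y. y \<in> Mmod.span S)"
proof -
  obtain S where S: "finite S" "\<forall>x. \<exists>c. (\<forall>s\<in>S. is_const_sps (c s)) \<and> x = (\<Sum>s\<in>S. act (c s) s)"
    using M_fg_R unfolding fin_gen_def by blast
  have "y \<in> Mmod.span S" for y
  proof -
    obtain c where c: "\<forall>s\<in>S. is_const_sps (c s)" "y = (\<Sum>s\<in>S. act (c s) s)" using S(2) by blast
    define r where "r s = (SOME r. c s = sps_const r)" for s
    have "c s = sps_const (r s)" if "s \<in> S" for s
    proof -
      have "\<exists>r. c s = sps_const r" using c(1) that unfolding is_const_sps_def by blast
      then show ?thesis unfolding r_def by (rule someI_ex)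
    qed
    then have "y = (\<Sum>s\<in>S. act (sps_const (r s)) s)" using c(2) by simp
    then show ?thesis unfolding Mmod.span_def by blast
  qed
  then show ?thesis using S(1) by blast
qed

lemma part1:
  assumes N: "submodule is_skew_poly act N"
  shows "submodule (\<lambda>_. True) act N"
proof -
  have N0: "0 \<in> N" and Nadd: "\<And>x y. x \<in> N \<Longrightarrow> y \<in> N \<Longrightarrow> x + y \<in> N"
    and Npoly: "\<And>b x. is_skew_poly b \<Longrightarrow> x \<in> N \<Longrightarrow> act b x \<in> N"
    using N unfolding submodule_def by blast+
  have subN: "Mmod.submod N" unfolding Mmod.submod_def using N0 Nadd Npoly const_poly by blast
  have main: "act a x \<in> N" if xN: "x \<in> N" for a x
  proof -
    define W where "W = {y. \<exists>b. y = act b x}"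
    have subW: "Mmod.submod W" unfolding Mmod.submod_def
    proof (intro conjI ballI allI)
      show "0 \<in> W" unfolding W_def using act_zero[of x] by (intro CollectI exI[of _ "\<lambda>_. 0"]) simp
    next
      fix y z assume "y \<in> W" "z \<in> W"
      then obtain b c where "y = act b x" "z = act c x" unfolding W_def by blast
      then have "y + z = act (sps_add b c) x" by (simp add: act_add)
      then show "y + z \<in> W" unfolding W_def by blast
    next
      fix r y assume "y \<in> W"
      then obtain b where "y = act b x" unfolding W_def by blast
      then have "act (sps_const r) y = act (sps_mult \<sigma> \<delta> (sps_const r) b) x" by (simp add: act_mult)
      then show "act (sps_const r) y \<in> W" unfolding W_def by blast
    qed
    have stab: "\<And>c w. w \<in> W \<Longrightarrow> act c w \<in> W"
    proof -
      fix c w assume "w \<in> W"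
      then obtain b where "w = act b x" unfolding W_def by blast
      then have "act c w = act (sps_mult \<sigma> \<delta> c b) x" by (simp add: act_mult)
      then show "act c w \<in> W" unfolding W_def by blast
    qed
    have xW: "x \<in> W" unfolding W_def using act_one[of x] by (intro CollectI exI[of _ sps_one]) simp
    obtain S where S: "finite S" "\<forall>y. y \<in> Mmod.span S" using M_span by blast
    obtain G where G: "finite G" "G \<subseteq> W" "W = Mmod.span G"
      using Mmod.noeth_submod[OF noethR S(1) subW] S(2) by blast
    obtain K where K: "\<forall>w\<in>W. (TT ^^ K) w \<in> Mmod.msub W" using nilp[OF subW stab G(1) G(3)] by blast
    define NW where "NW = N \<inter> W"
    have subNW: "Mmod.submod NW" unfolding NW_def using subN subW unfolding Mmod.submod_def by blast
    have "Mmod.span G \<subseteq> splus NW (Mmod.msub (Mmod.span G))"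
    proof
      fix y assume "y \<in> Mmod.span G"
      then obtain b where b: "y = act b x" using G(3) unfolding W_def by blast
      have "y = act (trunc K b) x + act (shiftd K b) (act (Ysps K) x)"
        unfolding b by (subst decomp[of b K]) (simp add: act_add act_mult)
      moreover have "act (trunc K b) x \<in> NW" unfolding NW_def
        using Npoly[OF trunc_poly xN] stab[OF xW] by blast
      moreover have "act (shiftd K b) (act (Ysps K) x) \<in> Mmod.msub (Mmod.span G)"
      proof -
        have "act (Ysps K) x \<in> Mmod.msub W" using K xW by (simp add: act_Ysps)
        then show ?thesis using act_msub[OF stab] G(3) by simp
      qed
      ultimately show "y \<in> splus NW (Mmod.msub (Mmod.span G))" unfolding splus_def by blast
    qed
    then have "Mmod.span G \<subseteq> NW" by (rule Mmod.nakayama[OF localR G(1) subNW])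
    moreover have "act a x \<in> W" unfolding W_def by blast
    ultimately show ?thesis using G(3) NW_def by blast
  qed
  show ?thesis unfolding submodule_def using N0 Nadd main by blast
qed

end

theorem mainTheorem11:
  fixes \<sigma> \<delta> :: "'r::{ring_1, topological_ab_group_add, topological_semigroup_mult, t2_space} \<Rightarrow> 'r"
    and act :: "'r sps \<Rightarrow> 'm::ab_group_add \<Rightarrow> 'm"
  assumes compactR: "compact (UNIV :: 'r set)"
    and noethR: "noetherian_ring TYPE('r)"
    and localR: "local_ring TYPE('r)"
    and sigma_aut: "ring_automorphism \<sigma>"
    and sigma_m: "\<sigma> ` max_ideal = max_ideal"
    and delta_der: "sigma_derivation \<sigma> \<delta>"
    and delta_R: "range \<delta> \<subseteq> max_ideal"
    and delta_m: "\<delta> ` max_ideal \<subseteq> ideal_sq max_ideal"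
    and M_A_mod: "sps_module \<sigma> \<delta> (\<lambda>_. True) act"
    and M_fg_A: "fin_gen (\<lambda>_. True) act"
    and M_fg_R: "fin_gen is_const_sps act"
  shows "(\<forall>N. submodule is_skew_poly act N \<longrightarrow> submodule (\<lambda>_. True) act N) \<and>
    (\<forall>(actQ :: 'r sps \<Rightarrow> 'q::ab_group_add \<Rightarrow> 'q) (f :: 'm \<Rightarrow> 'q).
       sps_module \<sigma> \<delta> is_skew_poly actQ \<and> surj f \<and> (\<forall>x y. f (x + y) = f x + f y) \<and>
       (\<forall>b x. is_skew_poly b \<longrightarrow> f (act b x) = actQ b (f x))
       \<longrightarrow> (\<exists>actA :: 'r sps \<Rightarrow> 'q \<Rightarrow> 'q.
              sps_module \<sigma> \<delta> (\<lambda>_. True) actA \<and>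
              (\<forall>b. is_skew_poly b \<longrightarrow> actA b = actQ b) \<and>
              (\<forall>a x. f (act a x) = actA a (f x))))"
proof -
  interpret M: Mctx \<sigma> \<delta> act
    by (intro Mctx.intro Rctx.intro Mctx_axioms.intro compactR noethR localR sigma_aut sigma_m
        delta_der delta_R delta_m M_A_mod M_fg_R)
  have P1: "\<forall>N. submodule is_skew_poly act N \<longrightarrow> submodule (\<lambda>_. True) act N"
    using M.part1 by blast
  have P2: "\<exists>actA :: 'r sps \<Rightarrow> 'q \<Rightarrow> 'q.
              sps_module \<sigma> \<delta> (\<lambda>_. True) actA \<and>
              (\<forall>b. is_skew_poly b \<longrightarrow> actA b = actQ b) \<and>
              (\<forall>a x. f (act a x) = actA a (f x))"
    if H: "sps_module \<sigma> \<delta> is_skew_poly actQ \<and> surj f \<and> (\<forall>x y. f (x + y) = f x + f y) \<and>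
       (\<forall>b x. is_skew_poly b \<longrightarrow> f (act b x) = actQ b (f x))"
    for actQ :: "'r sps \<Rightarrow> 'q::ab_group_add \<Rightarrow> 'q" and f :: "'m \<Rightarrow> 'q"
  proof -
    have Qmod: "sps_module \<sigma> \<delta> is_skew_poly actQ" and sf: "surj f"
      and fadd: "\<And>x y. f (x + y) = f x + f y"
      and feq: "\<And>b x. is_skew_poly b \<Longrightarrow> f (act b x) = actQ b (f x)" using H by blast+
    have f0: "f 0 = 0" using fadd[of 0 0] by simp
    have fdiff: "f (x - y) = f x - f y" for x y using fadd[of "x - y" y] by (simp add: eq_diff_eq)
    have Q0: "actQ b 0 = 0" if "is_skew_poly b" for b
    proof -
      have "actQ b (0 + 0) = actQ b 0 + actQ b 0" using Qmod that unfolding sps_module_def by blast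
      then show ?thesis by simp
    qed
    define K0 where "K0 = {x. f x = 0}"
    have "submodule is_skew_poly act K0" unfolding submodule_def K0_def
      using f0 fadd feq Q0 by simp
    then have K0A: "submodule (\<lambda>_. True) act K0" using P1 by blast
    have kill: "f x = 0 \<Longrightarrow> f (act a x) = 0" for a x using K0A unfolding submodule_def K0_def by blast
    have wd: "f x = f y \<Longrightarrow> f (act a x) = f (act a y)" for a x y
    proof -
      assume "f x = f y"
      then have "f (x - y) = 0" using fdiff by simp
      then have "f (act a (x - y)) = 0" by (rule kill)
      then show ?thesis using fdiff M.act_diff_r by simp
    qed
    define actA where "actA a q = f (act a (SOME x. f x = q))" for a q
    have key: "f (act a x) = actA a (f x)" for a x
    proof -
      have "f (SOME z. f z = f x) = f x" by (rule someI[of _ x]) simp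
      then show ?thesis unfolding actA_def using wd by metis
    qed
    have pre: "\<exists>x. q = f x" for q using sf by (metis surjD)
    have "sps_module \<sigma> \<delta> (\<lambda>_. True) actA" unfolding sps_module_def
    proof (intro conjI allI impI)
      fix a b :: "'r sps" and q :: 'q
      obtain x where x: "q = f x" using pre by blast
      show "actA (sps_add a b) q = actA a q + actA b q"
        unfolding x key[symmetric] by (simp add: M.act_add fadd)
    next
      fix a :: "'r sps" and q q' :: 'q
      obtain x where x: "q = f x" using pre by blast
      obtain y where y: "q' = f y" using pre by blast
      show "actA a (q + q') = actA a q + actA a q'"
        unfolding x y fadd[symmetric] key[symmetric] by (simp add: M.act_addr fadd)
    next
      fix q :: 'q
      obtain x where x: "q = f x" using pre by blast
      show "actA sps_one q = q" unfolding x key[symmetric] by (simp add: M.act_one)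
    next
      fix a b :: "'r sps" and q :: 'q
      obtain x where x: "q = f x" using pre by blast
      show "actA (sps_mult \<sigma> \<delta> a b) q = actA a (actA b q)"
        unfolding x key[symmetric] by (simp add: M.act_mult key)
    qed
    moreover have "\<forall>b. is_skew_poly b \<longrightarrow> actA b = actQ b"
    proof (intro allI impI ext)
      fix b :: "'r sps" and q :: 'q assume "is_skew_poly b"
      obtain x where x: "q = f x" using pre by blast
      show "actA b q = actQ b q" unfolding x key[symmetric] using feq[OF \<open>is_skew_poly b\<close>] by simp
    qed
    moreover have "\<forall>a x. f (act a x) = actA a (f x)" using key by blast
    ultimately show ?thesis by blast
  qed
  show ?thesis using P1 P2 by blast
qed


end
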